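(* The set of invariant states is $\mathbf{J}=\{\theta^w:w_l\le w\le w_u\}$.
   Context: Let $K\in\mathbb{N}$, $\lambda_k,\mu_k\in(0,\infty)$, $\rho_k=\lambda_k/\mu_k$, $\rho=\sum_k\rho_k>1$; $\Gamma_k$ a continuous probability distribution on $(0,\infty)$ with finite mean, $G_k(x)=1-\Gamma_k([0,x])$. Let $w_l=\sup\{u\ge0:\sum_k\rho_kG_k(u)<1\}$ and $w_u=\sup\{u\ge0:\sum_k\rho_kG_k(u)\le1\}$. A workload fluid model solution is $w:[0,\infty)\to\mathbb{R}_+$ with $w(t)=w(0)+\sum_k\rho_k\int_0^tG_k(w(s))ds-t$ for all $t$; for each $w_0\ge0$ there is a unique one with $w(0)=w_0$ (taken as known). $\mathbf{M}_2$ is the set of finite nonnegative Borel measures on $\mathbb{R}_+^2$, $\mathbf{M}_2^K$ its $K$-fold product. For $\vartheta\in\mathbf{M}_2^K$: $\vartheta_+=\sum_k\vartheta_k$, $w_\vartheta=\sup\{x\ge0:\vartheta_+([x,\infty)\times\mathbb{R}_+)>0\}$. For Borel $B\subset\mathbb{R}_+^2$, $x\in\mathbb{R}_+^2$: $B_x=\{y:y-x\in B\}$; $B_t=B_{(t,t)}$. $C=\mathbb{R}_+\times\{0\}\cup\{0\}\times\mathbb{R}_+$. $\mathbf{I}$ is the set of $\vartheta\in\mathbf{M}_2^K$ with $\vartheta_+(C_x)=0$ for all $x\in\mathbb{R}_+^2$, $w_\vartheta<\infty$, and $\max_kG_k(w_\vartheta-\varepsilon)>0$ for all $\varepsilon>0$.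 $\delta^+_x$ is the unit mass at $x$ if $x>0$, zero measure if $x=0$. A fluid model solution with initial measure $\vartheta\in\mathbf{I}$ is $\zeta:[0,\infty)\to\mathbf{M}_2^K$ with $\zeta(0)=\vartheta$ and $\zeta_k(t)(B)=\zeta_k(0)(B_t)+\lambda_k\int_0^t(\delta^+_{w(s)}\times\Gamma_k)(B_{t-s})ds$ for all $k$, Borel $B$, $t\ge0$, where $w$ is the workload fluid model solution with $w(0)=w_\vartheta$; it exists and is unique for every $\vartheta\in\mathbf{I}$. An invariant state is $\theta\in\mathbf{I}$ such that the unique fluid model solution $\zeta$ with $\zeta(0)=\theta$ satisfies $\zeta(t)=\theta$ for all $t\ge0$. For $w_l\le w\le w_u$, $\theta^w\in\mathbf{M}_2^K$ is the unique element such that for each $k$: $\theta^w_k([w,\infty)\times\mathbb{R}_+)=0$ and, for $0\le a<b\le w$ and $0\le c<d\le\infty$, $\theta^w_k([a,b)\times[c,d))=\lambda_k\int_{w-b}^{w-a}\Gamma_k([c+u,d+u))du$. *)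

theory Defs
  imports "HOL-Probability.Probability"
begin

definition rho :: "('k \<Rightarrow> real) \<Rightarrow> ('k \<Rightarrow> real) \<Rightarrow> 'k \<Rightarrow> real" where
  "rho lam mu k = lam k / mu k"

definition Gbar :: "real measure \<Rightarrow> real \<Rightarrow> real" where
  "Gbar Gam x = 1 - measure Gam {0..x}"

(* w_l and w_u (the sup/inequalities are read so that
   [w_l, w_u] is the set of roots of sum_k rho_k G_k(u) = 1) *)
definition w_l :: "('k::finite \<Rightarrow> real) \<Rightarrow> ('k \<Rightarrow> real) \<Rightarrow> ('k \<Rightarrow> real measure) \<Rightarrow> real" where
  "w_l lam mu Gam = Sup {u. 0 \<le> u \<and> (\<Sum>k\<in>UNIV. rho lam mu k * Gbar (Gam k) u) > 1}"

definition w_u :: "('k::finite \<Rightarrow> real) \<Rightarrow> ('k \<Rightarrow> real) \<Rightarrow> ('k \<Rightarrow> real measure) \<Rightarrow> real" where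
  "w_u lam mu Gam = Sup {u. 0 \<le> u \<and> (\<Sum>k\<in>UNIV. rho lam mu k * Gbar (Gam k) u) \<ge> 1}"

definition workload_sol :: "('k::finite \<Rightarrow> real) \<Rightarrow> ('k \<Rightarrow> real) \<Rightarrow> ('k \<Rightarrow> real measure)
    \<Rightarrow> (real \<Rightarrow> real) \<Rightarrow> real \<Rightarrow> bool" where
  "workload_sol lam mu Gam w w0 \<longleftrightarrow> w 0 = w0 \<and>
     (\<forall>t\<ge>0. 0 \<le> w t \<and> (\<forall>k. (\<lambda>s. Gbar (Gam k) (w s)) integrable_on {0..t}) \<and>
        w t = w 0 + (\<Sum>k\<in>UNIV. rho lam mu k * integral {0..t} (\<lambda>s. Gbar (Gam k) (w s))) - t)"

definition Rp2 :: "(real \<times> real) set" where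
  "Rp2 = {x. 0 \<le> fst x \<and> 0 \<le> snd x}"

(* M_2: finite nonnegative Borel measures on R_+^2, represented as finite Borel measures
   on R^2 that put no mass outside R_+^2 *)
definition M2 :: "(real \<times> real) measure set" where
  "M2 = {m. sets m = sets (borel :: (real \<times> real) measure) \<and> emeasure m UNIV < \<infinity> \<and>
            emeasure m (UNIV - Rp2) = 0}"

definition plus_em :: "('k::finite \<Rightarrow> (real \<times> real) measure) \<Rightarrow> (real \<times> real) set \<Rightarrow> ennreal" where
  "plus_em th A = (\<Sum>k\<in>UNIV. emeasure (th k) A)"

definition wset :: "('k::finite \<Rightarrow> (real \<times> real) measure) \<Rightarrow> real set" where
  "wset th = {x. 0 \<le> x \<and> plus_em th ({x..} \<times> {0..}) > 0}"

(* w_vartheta; the supremum of the empty set is taken to be 0 *)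
definition w_th :: "('k::finite \<Rightarrow> (real \<times> real) measure) \<Rightarrow> real" where
  "w_th th = Sup (insert 0 (wset th))"

definition shift :: "(real \<times> real) set \<Rightarrow> real \<times> real \<Rightarrow> (real \<times> real) set" where
  "shift B x = {y. y - x \<in> B}"

definition Cset :: "(real \<times> real) set" where
  "Cset = {p. (0 \<le> fst p \<and> snd p = 0) \<or> (fst p = 0 \<and> 0 \<le> snd p)}"

definition Istates :: "('k::finite \<Rightarrow> real measure) \<Rightarrow> ('k \<Rightarrow> (real \<times> real) measure) set" where
  "Istates Gam = {th. (\<forall>k. th k \<in> M2) \<and> (\<forall>x\<in>Rp2. plus_em th (shift Cset x) = 0) \<and>
      bdd_above (wset th) \<and>
      (\<forall>\<epsilon>>0. Max (range (\<lambda>k. Gbar (Gam k) (w_th th - \<epsilon>))) > 0)}"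

definition delta_plus :: "real \<Rightarrow> real measure" where
  "delta_plus x = (if x > 0 then return borel x else null_measure borel)"

definition fluid_sol :: "('k::finite \<Rightarrow> real) \<Rightarrow> ('k \<Rightarrow> real) \<Rightarrow> ('k \<Rightarrow> real measure)
    \<Rightarrow> ('k \<Rightarrow> (real \<times> real) measure) \<Rightarrow> (real \<Rightarrow> 'k \<Rightarrow> (real \<times> real) measure) \<Rightarrow> bool" where
  "fluid_sol lam mu Gam th zeta \<longleftrightarrow> zeta 0 = th \<and> (\<forall>t\<ge>0. \<forall>k. zeta t k \<in> M2) \<and>
     (\<exists>w. workload_sol lam mu Gam w (w_th th) \<and>
        (\<forall>k B t. B \<in> sets (borel :: (real \<times> real) measure) \<and> B \<subseteq> Rp2 \<and> 0 \<le> t \<longrightarrow>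
           emeasure (zeta t k) B =
             emeasure (zeta 0 k) (shift B (t, t)) +
             ennreal (lam k) * (\<integral>\<^sup>+ s \<in> {0..t}.
                emeasure (delta_plus (w s) \<Otimes>\<^sub>M Gam k) (shift B (t - s, t - s)) \<partial>lborel)))"

(* invariant states (existence and uniqueness of fluid model solutions being known) *)
definition invariant_state :: "('k::finite \<Rightarrow> real) \<Rightarrow> ('k \<Rightarrow> real) \<Rightarrow> ('k \<Rightarrow> real measure)
    \<Rightarrow> ('k \<Rightarrow> (real \<times> real) measure) \<Rightarrow> bool" where
  "invariant_state lam mu Gam th \<longleftrightarrow> th \<in> Istates Gam \<and>
     (\<exists>zeta. fluid_sol lam mu Gam th zeta \<and> (\<forall>t\<ge>0. zeta t = th))"

definition theta_w :: "('k::finite \<Rightarrow> real) \<Rightarrow> ('k \<Rightarrow> real measure) \<Rightarrow> real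
    \<Rightarrow> 'k \<Rightarrow> (real \<times> real) measure" where
  "theta_w lam Gam w = (\<lambda>k. THE m. m \<in> M2 \<and> emeasure m ({w..} \<times> {0..}) = 0 \<and>
     (\<forall>a b c d. 0 \<le> a \<and> a < b \<and> b \<le> w \<and> 0 \<le> c \<and> c < d \<longrightarrow>
        measure m ({a..<b} \<times> {c..<d}) =
          lam k * (\<integral>u\<in>{w - b..w - a}. measure (Gam k) {c + u..<d + u} \<partial>lborel)) \<and>
     (\<forall>a b c. 0 \<le> a \<and> a < b \<and> b \<le> w \<and> 0 \<le> c \<longrightarrow>
        measure m ({a..<b} \<times> {c..}) =
          lam k * (\<integral>u\<in>{w - b..w - a}. measure (Gam k) {c + u..} \<partial>lborel)))"

end

theory Submission
  imports Defs
begin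

locale qs =
  fixes lam mu :: "'k::finite \<Rightarrow> real" and Gam :: "'k \<Rightarrow> real measure"
  assumes lam_pos: "\<And>k. 0 < lam k"
    and mu_pos: "\<And>k. 0 < mu k"
    and rho_gt1: "(\<Sum>k\<in>UNIV. rho lam mu k) > 1"
    and Gam_prob: "\<And>k. prob_space (Gam k)"
    and Gam_borel: "\<And>k. sets (Gam k) = sets (borel :: real measure)"
    and Gam_pos: "\<And>k. emeasure (Gam k) {..0} = 0"
    and Gam_cont: "\<And>k x. measure (Gam k) {x} = 0"
begin

definition f :: "real \<Rightarrow> real" where
  "f u = (\<Sum>k\<in>UNIV. rho lam mu k * Gbar (Gam k) u)"

lemma rd: "real_distribution (Gam k)"
  using Gam_prob Gam_borel by (simp add: real_distribution_def real_distribution_axioms_def)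

lemma space_Gam[simp]: "space (Gam k) = UNIV"
  using Gam_borel sets_eq_imp_space_eq by fastforce

lemma sets_Gam[measurable_cong]: "sets (Gam k) = sets borel" by (rule Gam_borel)

lemma rho_pos: "0 < rho lam mu k"
  using lam_pos mu_pos by (simp add: rho_def)

lemma meas_le0: "measure (Gam k) {..0} = 0"
  using Gam_pos by (simp add: measure_def)

lemma Gbar_cdf: "Gbar (Gam k) u = 1 - cdf (Gam k) u"
proof -
  interpret real_distribution "Gam k" by (rule rd)
  have "measure (Gam k) {..u} = measure (Gam k) {..<0} + measure (Gam k) {0..u}" if "u \<ge> 0"
  proof -
    have e: "{..u} = {..<0} \<union> {0..u}" using that by auto
    have "measure (Gam k) ({..<0} \<union> {0..u}) = measure (Gam k) {..<0} + measure (Gam k) {0..u}"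
      by (rule finite_measure_Union) auto
    then show ?thesis by (simp only: e)
  qed
  moreover have "measure (Gam k) {..<0} = 0"
    using finite_measure_mono[of "{..<0}" "{..0}"] meas_le0[of k] measure_nonneg[of "Gam k" "{..<0}"] by force
  moreover have "measure (Gam k) {..u} = 0" if "u < 0"
    using finite_measure_mono[of "{..u}" "{..0}"] meas_le0[of k] that by (simp add: measure_nonneg antisym)
  ultimately show ?thesis by (cases "u \<ge> 0") (auto simp: Gbar_def cdf_def)
qed

lemma Gbar_meas: "Gbar (Gam k) u = measure (Gam k) {u<..}"
proof -
  interpret real_distribution "Gam k" by (rule rd)
  have "measure (Gam k) {u<..} = 1 - measure (Gam k) {..u}"
    using prob_compl[of "{..u}"] by (simp add: Compl_eq_Diff_UNIV[symmetric] Compl_atMost)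
  then show ?thesis by (simp add: Gbar_cdf cdf_def)
qed

lemma Gbar_meas2: "Gbar (Gam k) u = measure (Gam k) {u..}"
proof -
  interpret real_distribution "Gam k" by (rule rd)
  have e: "{u..} = {u} \<union> {u<..}" by auto
  have "measure (Gam k) ({u} \<union> {u<..}) = measure (Gam k) {u} + measure (Gam k) {u<..}"
    by (rule finite_measure_Union) auto
  then have "measure (Gam k) {u..} = measure (Gam k) {u} + measure (Gam k) {u<..}"
    by (simp only: e)
  then show ?thesis using Gam_cont Gbar_meas by simp
qed

lemma Gbar_nonneg: "0 \<le> Gbar (Gam k) u" by (simp add: Gbar_meas)
lemma Gbar_le1: "Gbar (Gam k) u \<le> 1"
proof -
  interpret real_distribution "Gam k" by (rule rd)
  show ?thesis by (simp add: Gbar_meas)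
qed

lemma Gbar_mono: "u \<le> v \<Longrightarrow> Gbar (Gam k) v \<le> Gbar (Gam k) u"
proof -
  interpret real_distribution "Gam k" by (rule rd)
  assume "u \<le> v" then show ?thesis by (simp add: Gbar_cdf cdf_nondecreasing)
qed

lemma Gbar_0: "Gbar (Gam k) 0 = 1"
  using meas_le0 by (simp add: Gbar_cdf cdf_def)

lemma Gbar_cont: "isCont (Gbar (Gam k)) u"
proof -
  interpret real_distribution "Gam k" by (rule rd)
  have "isCont (cdf (Gam k)) u" using isCont_cdf Gam_cont by simp
  then show ?thesis unfolding Gbar_cdf[abs_def] by (intro continuous_intros)
qed

lemma Gbar_lim: "(Gbar (Gam k) \<longlongrightarrow> 0) at_top"
proof -
  interpret real_distribution "Gam k" by (rule rd)
  have "((\<lambda>u. 1 - cdf (Gam k) u) \<longlongrightarrow> 1 - 1) at_top"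
    by (intro tendsto_intros cdf_lim_at_top_prob)
  then show ?thesis unfolding Gbar_cdf by simp
qed

lemma f_cont: "isCont f u"
  unfolding f_def[abs_def] by (intro continuous_intros Gbar_cont)

lemma f_mono: "u \<le> v \<Longrightarrow> f v \<le> f u"
  unfolding f_def by (intro sum_mono mult_left_mono Gbar_mono) (auto intro: less_imp_le rho_pos)

lemma f_0: "f 0 = (\<Sum>k\<in>UNIV. rho lam mu k)"
  by (simp add: f_def Gbar_0)

lemma f_nonneg: "0 \<le> f u"
  unfolding f_def by (intro sum_nonneg mult_nonneg_nonneg Gbar_nonneg) (auto intro: less_imp_le rho_pos)

lemma f_lim: "(f \<longlongrightarrow> 0) at_top"
proof -
  have "((\<lambda>u. \<Sum>k\<in>UNIV. rho lam mu k * Gbar (Gam k) u) \<longlongrightarrow> (\<Sum>k\<in>UNIV. rho lam mu k * 0)) at_top"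
    by (intro tendsto_intros Gbar_lim)
  then show ?thesis by (simp add: f_def[abs_def])
qed

end

context qs begin

lemma Gbar_le0: "u \<le> 0 \<Longrightarrow> Gbar (Gam k) u = 1"
  using Gbar_mono[of u 0 k] Gbar_0[of k] Gbar_le1[of k u] by simp

lemma f_le0: "u \<le> 0 \<Longrightarrow> f u = (\<Sum>k\<in>UNIV. rho lam mu k)"
  by (simp add: f_def Gbar_le0)

abbreviation "S1 \<equiv> {u. 0 \<le> u \<and> 1 < f u}"
abbreviation "S2 \<equiv> {u. 0 \<le> u \<and> 1 \<le> f u}"

lemma wl_eq: "w_l lam mu Gam = Sup S1" by (simp add: w_l_def f_def)
lemma wu_eq: "w_u lam mu Gam = Sup S2" by (simp add: w_u_def f_def)

lemma exU: "\<exists>U. 0 \<le> U \<and> f U < 1"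
proof -
  have "eventually (\<lambda>u. f u < 1) at_top"
    using order_tendstoD(2)[OF f_lim, of 1] by simp
  then obtain N where N: "\<And>u. u \<ge> N \<Longrightarrow> f u < 1" by (auto simp: eventually_at_top_linorder)
  show ?thesis by (rule exI[of _ "max N 0"]) (auto intro: N)
qed

lemma S2_bdd: "bdd_above S2"
proof -
  obtain U where U: "0 \<le> U" "f U < 1" using exU by blast
  have "u \<le> U" if "u \<in> S2" for u
  proof (rule ccontr)
    assume "\<not> u \<le> U"
    then have "f u \<le> f U" by (intro f_mono) simp
    with that U show False by simp
  qed
  then show ?thesis by (auto simp: bdd_above_def)
qed

lemma S1_bdd: "bdd_above S1"
  using S2_bdd by (rule bdd_above_mono) auto

lemma zero_S1: "0 \<in> S1" using f_0 rho_gt1 by simp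

lemma f1_pos: "f w = 1 \<Longrightarrow> 0 < w"
  using f_le0[of w] rho_gt1 by (cases "w \<le> 0") auto

lemma f1_imp: assumes "f w = 1" shows "w_l lam mu Gam \<le> w \<and> w \<le> w_u lam mu Gam"
proof
  have w0: "0 < w" using f1_pos assms .
  show "w_l lam mu Gam \<le> w" unfolding wl_eq
  proof (rule cSup_least)
    show "S1 \<noteq> {}" using zero_S1 by blast
    fix u assume u: "u \<in> S1"
    show "u \<le> w"
    proof (rule ccontr)
      assume "\<not> u \<le> w" then have "f u \<le> f w" by (intro f_mono) simp
      with u assms show False by simp
    qed
  qed
  show "w \<le> w_u lam mu Gam" unfolding wu_eq
    using w0 assms by (intro cSup_upper[OF _ S2_bdd]) auto
qed

lemma cont_gt: assumes "a < f w" shows "\<exists>e>0. a < f (w + e)"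
proof -
  have "eventually (\<lambda>x. a < f x) (at w)"
    using order_tendstoD(1)[OF f_cont[of w, unfolded isCont_def] assms] .
  then obtain d where d: "d > 0" "\<And>x. x \<noteq> w \<Longrightarrow> dist x w < d \<Longrightarrow> a < f x"
    by (auto simp: eventually_at)
  show ?thesis using d by (intro exI[of _ "d/2"]) (auto simp: dist_real_def)
qed

lemma cont_lt: assumes "f w < a" shows "\<exists>e>0. f (w - e) < a"
proof -
  have "eventually (\<lambda>x. f x < a) (at w)"
    using order_tendstoD(2)[OF f_cont[of w, unfolded isCont_def] assms] .
  then obtain d where d: "d > 0" "\<And>x. x \<noteq> w \<Longrightarrow> dist x w < d \<Longrightarrow> f x < a"
    by (auto simp: eventually_at)
  show ?thesis using d by (intro exI[of _ "d/2"]) (auto simp: dist_real_def)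
qed

lemma imp_f1: assumes "w_l lam mu Gam \<le> w" "w \<le> w_u lam mu Gam" shows "f w = 1"
proof -
  have "0 \<le> w_l lam mu Gam" unfolding wl_eq by (rule cSup_upper[OF zero_S1 S1_bdd])
  then have w0: "0 \<le> w" using assms(1) by linarith
  have "\<not> f w > 1"
  proof
    assume "f w > 1"
    then obtain e where e: "e > 0" "1 < f (w + e)" using cont_gt by blast
    then have "w + e \<in> S1" using w0 by simp
    then have "w + e \<le> w_l lam mu Gam" unfolding wl_eq by (rule cSup_upper[OF _ S1_bdd])
    with assms e show False by simp
  qed
  moreover have "\<not> f w < 1"
  proof
    assume "f w < 1"
    then obtain e where e: "e > 0" "f (w - e) < 1" using cont_lt by blast
    have "w_u lam mu Gam \<le> w - e" unfolding wu_eq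
    proof (rule cSup_least)
      have "0 \<in> S2" using zero_S1 by simp
      then show "S2 \<noteq> {}" by blast
      fix u assume u: "u \<in> S2"
      show "u \<le> w - e"
      proof (rule ccontr)
        assume "\<not> u \<le> w - e" then have "f u \<le> f (w - e)" by (intro f_mono) simp
        with u e show False by simp
      qed
    qed
    with assms e show False by simp
  qed
  ultimately show ?thesis by simp
qed

lemma f1_iff: "f w = 1 \<longleftrightarrow> w_l lam mu Gam \<le> w \<and> w \<le> w_u lam mu Gam"
  using f1_imp imp_f1 by blast

end

lemma fst_bm[measurable]: "fst \<in> borel_measurable (borel :: (real \<times> real) measure)"
  using measurable_fst[of "borel :: real measure" "borel :: real measure"] unfolding borel_prod .
lemma snd_bm[measurable]: "snd \<in> borel_measurable (borel :: (real \<times> real) measure)"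
  using measurable_snd[of "borel :: real measure" "borel :: real measure"] unfolding borel_prod .

context qs begin

lemma Rp2_sets: "Rp2 \<in> sets (borel :: (real \<times> real) measure)"
proof -
  have "{x \<in> space borel. 0 \<le> fst x \<and> 0 \<le> snd x} \<in> sets (borel :: (real \<times> real) measure)"
    by measurable
  then show ?thesis by (simp add: Rp2_def)
qed

lemma sets_pairG: "sets (lborel \<Otimes>\<^sub>M Gam k) = sets (borel :: (real \<times> real) measure)"
proof -
  have "sets (lborel \<Otimes>\<^sub>M Gam k) = sets (borel \<Otimes>\<^sub>M (borel :: real measure))"
    by (rule sets_pair_measure_cong) (simp_all add: Gam_borel)
  then show ?thesis unfolding borel_prod .
qed

lemma sets_pairG'[simp]: "sets (borel \<Otimes>\<^sub>M Gam k) = sets (borel :: (real \<times> real) measure)"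
  using sets_pairG[of k] by simp


lemma pre_meas:
  assumes "C \<in> sets (borel :: (real \<times> real) measure)"
  shows "{p. (w - fst p, snd p - fst p) \<in> C} \<in> sets (lborel \<Otimes>\<^sub>M Gam k)"
proof -
  have "(\<lambda>p::real\<times>real. (w - fst p, snd p - fst p)) -` C \<inter> space borel \<in> sets borel"
    by (rule measurable_sets[OF borel_measurable_Pair assms]) measurable
  then show ?thesis by (simp add: sets_pairG vimage_def)
qed

lemma slice_meas:
  assumes "C \<in> sets (borel :: (real \<times> real) measure)"
  shows "{v. (a, v + b) \<in> C} \<in> sets (Gam k)"
proof -
  have "(\<lambda>v::real. (a, v + b)) -` C \<inter> space borel \<in> sets borel"
    by (rule measurable_sets[OF borel_measurable_Pair assms]) measurable
  then show ?thesis by (simp add: Gam_borel vimage_def)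
qed

definition K :: "'k \<Rightarrow> real \<Rightarrow> (real \<times> real) set \<Rightarrow> real \<Rightarrow> ennreal" where
  "K k w C r = emeasure (Gam k) {v. (w - r, v - r) \<in> C}"

lemma K_meas:
  assumes "C \<in> sets (borel :: (real \<times> real) measure)"
  shows "K k w C \<in> borel_measurable borel"
proof -
  interpret prob_space "Gam k" by (rule Gam_prob)
  have "(\<lambda>r. emeasure (Gam k) (Pair r -` {p. (w - fst p, snd p - fst p) \<in> C})) \<in> borel_measurable lborel"
    by (rule measurable_emeasure_Pair[OF pre_meas[OF assms]])
  then show ?thesis by (simp add: K_def[abs_def] vimage_def measurable_lborel1)
qed

definition phi :: "real \<Rightarrow> real \<times> real \<Rightarrow> real \<times> real" where
  "phi w p = (w - fst p, snd p - fst p)"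

definition dens :: "'k \<Rightarrow> real \<Rightarrow> real \<times> real \<Rightarrow> ennreal" where
  "dens k w p = ennreal (lam k) * indicator ({0..} \<times> UNIV) p * indicator Rp2 (phi w p)"

definition mw :: "real \<Rightarrow> 'k \<Rightarrow> (real \<times> real) measure" where
  "mw w k = distr (density (lborel \<Otimes>\<^sub>M Gam k) (dens k w)) borel (phi w)"

lemma phi_meas: "phi w \<in> measurable (lborel \<Otimes>\<^sub>M Gam k) borel"
proof -
  have "phi w \<in> measurable borel borel" unfolding phi_def by (rule borel_measurable_Pair) measurable
  then show ?thesis by (simp add: measurable_def sets_pairG space_pair_measure)
qed

lemma dens_meas: "dens k w \<in> borel_measurable (lborel \<Otimes>\<^sub>M Gam k)"
proof -
  have "(\<lambda>p::real\<times>real. (w - fst p, snd p - fst p)) \<in> borel_measurable borel"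
    by (rule borel_measurable_Pair) measurable
  then have "(\<lambda>p::real\<times>real. indicator Rp2 (w - fst p, snd p - fst p) :: ennreal) \<in> borel_measurable borel"
    using measurable_compose[OF _ borel_measurable_indicator[OF Rp2_sets]] by blast
  note ind = this
  have e: "({0..} \<times> UNIV :: (real \<times> real) set) = {x \<in> space borel. 0 \<le> fst x}" by auto
  have hs: "({0..} \<times> UNIV :: (real \<times> real) set) \<in> sets borel" unfolding e by measurable
  have i2: "(\<lambda>p::real\<times>real. ennreal (lam k) * indicator ({0..} \<times> UNIV) p) \<in> borel_measurable borel"
    using borel_measurable_indicator[OF hs] by measurable
  have "dens k w \<in> borel_measurable borel" unfolding dens_def phi_def
    by (rule borel_measurable_times_ennreal[OF i2 ind])
  then show ?thesis by (simp add: measurable_def sets_pairG space_pair_measure)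
qed

lemma sets_mw[simp]: "sets (mw w k) = sets borel" by (simp add: mw_def)
lemma space_mw[simp]: "space (mw w k) = UNIV" by (simp add: mw_def)

lemma mw_emeasure:
  assumes B: "B \<in> sets (borel :: (real \<times> real) measure)"
  shows "emeasure (mw w k) B = ennreal (lam k) * (\<integral>\<^sup>+ r. indicator {0..} r * K k w (B \<inter> Rp2) r \<partial>lborel)"
proof -
  interpret G: prob_space "Gam k" by (rule Gam_prob)
  have BR: "B \<inter> Rp2 \<in> sets borel" using B Rp2_sets by auto
  have pm: "phi w -` B \<inter> space (lborel \<Otimes>\<^sub>M Gam k) \<in> sets (lborel \<Otimes>\<^sub>M Gam k)"
    using measurable_sets[OF phi_meas B] .
  have "emeasure (mw w k) B = emeasure (density (lborel \<Otimes>\<^sub>M Gam k) (dens k w)) (phi w -` B \<inter> space (lborel \<Otimes>\<^sub>M Gam k))"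
    unfolding mw_def by (subst emeasure_distr) (simp_all add: phi_meas B)
  also have "\<dots> = (\<integral>\<^sup>+ p. dens k w p * indicator (phi w -` B \<inter> space (lborel \<Otimes>\<^sub>M Gam k)) p \<partial>(lborel \<Otimes>\<^sub>M Gam k))"
    by (rule emeasure_density[OF dens_meas pm])
  also have "\<dots> = (\<integral>\<^sup>+ r. \<integral>\<^sup>+ v. dens k w (r, v) * indicator (phi w -` B \<inter> space (lborel \<Otimes>\<^sub>M Gam k)) (r, v) \<partial>Gam k \<partial>lborel)"
    by (rule G.nn_integral_fst[symmetric]) (use dens_meas pm in measurable)
  also have "\<dots> = (\<integral>\<^sup>+ r. \<integral>\<^sup>+ v. (ennreal (lam k) * indicator {0..} r) * indicator {v. (w - r, v - r) \<in> B \<inter> Rp2} v \<partial>Gam k \<partial>lborel)"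
    by (intro nn_integral_cong) (auto simp: dens_def phi_def indicator_def space_pair_measure)
  also have "\<dots> = (\<integral>\<^sup>+ r. (ennreal (lam k) * indicator {0..} r) * K k w (B \<inter> Rp2) r \<partial>lborel)"
  proof (intro nn_integral_cong)
    fix r :: real
    have "{v. (w - r, v - r) \<in> B \<inter> Rp2} \<in> sets (Gam k)"
      using slice_meas[OF BR, of "w - r" "- r"] by simp
    then show "(\<integral>\<^sup>+ v. (ennreal (lam k) * indicator {0..} r) * indicator {v. (w - r, v - r) \<in> B \<inter> Rp2} v \<partial>Gam k)
       = (ennreal (lam k) * indicator {0..} r) * K k w (B \<inter> Rp2) r"
      by (simp add: nn_integral_cmult_indicator K_def)
  qed
  also have "\<dots> = ennreal (lam k) * (\<integral>\<^sup>+ r. indicator {0..} r * K k w (B \<inter> Rp2) r \<partial>lborel)"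
    by (subst nn_integral_cmult[symmetric]) (use K_meas[OF BR] in \<open>auto simp: mult.assoc\<close>)
  finally show ?thesis .
qed

end

context qs begin

lemma K_Rp2: "B \<subseteq> Rp2 \<Longrightarrow> B \<inter> Rp2 = B" by auto

lemma mw_emeasure':
  assumes "B \<in> sets borel" "B \<subseteq> Rp2"
  shows "emeasure (mw w k) B = ennreal (lam k) * (\<integral>\<^sup>+ r. indicator {0..} r * K k w B r \<partial>lborel)"
  using mw_emeasure[OF assms(1)] assms(2) by (simp add: Int_absorb2)

lemma mw_outside: "emeasure (mw w k) (UNIV - Rp2) = 0"
proof -
  have "(UNIV - Rp2) \<in> sets borel" using Rp2_sets by auto
  from mw_emeasure[OF this] show ?thesis by (simp add: K_def)
qed

lemma K_le1: "K k w C r \<le> 1"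
proof -
  interpret prob_space "Gam k" by (rule Gam_prob)
  show ?thesis unfolding K_def by (rule emeasure_le_1)
qed

lemma mw_finite:
  assumes "0 \<le> w" shows "emeasure (mw w k) UNIV < \<infinity>"
proof -
  have "emeasure (mw w k) UNIV = ennreal (lam k) * (\<integral>\<^sup>+ r. indicator {0..} r * K k w Rp2 r \<partial>lborel)"
    using mw_emeasure[of UNIV w k] by simp
  also have "\<dots> \<le> ennreal (lam k) * (\<integral>\<^sup>+ r. indicator {0..w} r \<partial>lborel)"
  proof (intro mult_left_mono nn_integral_mono)
    fix r :: real
    show "indicator {0..} r * K k w Rp2 r \<le> indicator {0..w} r"
    proof (cases "0 \<le> r \<and> r \<le> w")
      case True then show ?thesis using K_le1[of k w Rp2 r] by (simp add: indicator_def)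
    next
      case False
      then have "r < 0 \<or> w < r" by auto
      then show ?thesis
      proof
        assume "r < 0" then show ?thesis by (simp add: indicator_def)
      next
        assume "w < r"
        then have "{v. (w - r, v - r) \<in> Rp2} = {}" by (auto simp: Rp2_def)
        then show ?thesis by (simp add: K_def)
      qed
    qed
  qed simp
  also have "\<dots> < \<infinity>" using assms by (simp add: ennreal_mult_less_top)
  finally show ?thesis .
qed

lemma mw_M2: "0 \<le> w \<Longrightarrow> mw w k \<in> M2"
  using mw_finite mw_outside by (simp add: M2_def)

lemma shift_sets:
  assumes "B \<in> sets (borel :: (real \<times> real) measure)"
  shows "shift B x \<in> sets borel"
proof -
  have "(\<lambda>y::real\<times>real. y - x) \<in> borel_measurable borel"
    by (intro borel_measurable_continuous_onI continuous_intros)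
  from measurable_sets[OF this assms] show ?thesis by (simp add: shift_def vimage_def)
qed

lemma sets_delta[simp]: "sets (delta_plus y) = sets borel"
  by (simp add: delta_plus_def)

lemma sets_deltaG: "sets (delta_plus y \<Otimes>\<^sub>M Gam k) = sets (borel :: (real \<times> real) measure)"
proof -
  have "sets (delta_plus y \<Otimes>\<^sub>M Gam k) = sets (borel \<Otimes>\<^sub>M (borel :: real measure))"
    by (rule sets_pair_measure_cong) (simp_all add: Gam_borel)
  then show ?thesis unfolding borel_prod .
qed

lemma delta_em:
  assumes A: "A \<in> sets (borel :: (real \<times> real) measure)"
  shows "emeasure (delta_plus y \<Otimes>\<^sub>M Gam k) A = (if 0 < y then emeasure (Gam k) (Pair y -` A) else 0)"
proof -
  interpret G: prob_space "Gam k" by (rule Gam_prob)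
  have A': "A \<in> sets (delta_plus y \<Otimes>\<^sub>M Gam k)" using A sets_deltaG by simp
  have "emeasure (delta_plus y \<Otimes>\<^sub>M Gam k) A = (\<integral>\<^sup>+x. emeasure (Gam k) (Pair x -` A) \<partial>delta_plus y)"
    by (rule G.emeasure_pair_measure_alt[OF A'])
  also have "\<dots> = (if 0 < y then emeasure (Gam k) (Pair y -` A) else 0)"
  proof (cases "0 < y")
    case True
    have A'': "A \<in> sets (borel \<Otimes>\<^sub>M Gam k)" using A by simp
    have "(\<lambda>x. emeasure (Gam k) (Pair x -` A)) \<in> borel_measurable borel"
      by (rule G.measurable_emeasure_Pair[OF A''])
    with True show ?thesis by (simp add: delta_plus_def nn_integral_return)
  next
    case False then show ?thesis by (simp add: delta_plus_def)
  qed
  finally show ?thesis .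
qed

lemma Pair_shift: "Pair y -` shift B (c, c) = {v. (y - c, v - c) \<in> B}"
  by (auto simp: shift_def)

lemma fluid_integrand:
  assumes "B \<in> sets borel"
  shows "emeasure (delta_plus y \<Otimes>\<^sub>M Gam k) (shift B (c, c)) = (if 0 < y then K k y B c else 0)"
  using delta_em[OF shift_sets[OF assms]] by (simp add: Pair_shift K_def)

lemma reflect_int:
  fixes g :: "real \<Rightarrow> ennreal"
  assumes g: "g \<in> borel_measurable borel"
  shows "(\<integral>\<^sup>+ s\<in>{0..t}. g (t - s) \<partial>lborel) = (\<integral>\<^sup>+ r. indicator {0..t} r * g r \<partial>lborel)"
proof -
  have m: "(\<lambda>r::real. indicator {0..t} r * g r) \<in> borel_measurable borel" using g by measurable
  have "(\<integral>\<^sup>+ r. indicator {0..t} r * g r \<partial>lborel) = ennreal \<bar>-1\<bar> * (\<integral>\<^sup>+ x. indicator {0..t} (t + (-1) * x) * g (t + (-1) * x) \<partial>lborel)"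
    by (rule nn_integral_real_affine[OF m]) simp
  also have "\<dots> = (\<integral>\<^sup>+ s\<in>{0..t}. g (t - s) \<partial>lborel)"
    by (auto intro!: nn_integral_cong simp: indicator_def mult.commute)
  finally show ?thesis ..
qed

lemma trans_int:
  fixes g :: "real \<Rightarrow> ennreal"
  assumes g: "g \<in> borel_measurable borel"
  shows "(\<integral>\<^sup>+ r. indicator {0..} r * g (r + t) \<partial>lborel) = (\<integral>\<^sup>+ r. indicator {t..} r * g r \<partial>lborel)"
proof -
  have m: "(\<lambda>r::real. indicator {t..} r * g r) \<in> borel_measurable borel" using g by measurable
  have "(\<integral>\<^sup>+ r. indicator {t..} r * g r \<partial>lborel) = ennreal \<bar>1\<bar> * (\<integral>\<^sup>+ x. indicator {t..} (t + 1 * x) * g (t + 1 * x) \<partial>lborel)"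
    by (rule nn_integral_real_affine[OF m]) simp
  also have "\<dots> = (\<integral>\<^sup>+ r. indicator {0..} r * g (r + t) \<partial>lborel)"
    by (auto intro!: nn_integral_cong simp: indicator_def add.commute)
  finally show ?thesis ..
qed

lemma split_int:
  fixes g :: "real \<Rightarrow> ennreal"
  assumes g: "g \<in> borel_measurable borel" and t: "0 \<le> t"
  shows "(\<integral>\<^sup>+ r. indicator {0..} r * g r \<partial>lborel) =
    (\<integral>\<^sup>+ r. indicator {t..} r * g r \<partial>lborel) + (\<integral>\<^sup>+ r. indicator {0..t} r * g r \<partial>lborel)"
proof -
  have "(\<integral>\<^sup>+ r. indicator {0..} r * g r \<partial>lborel) = (\<integral>\<^sup>+ r. indicator {t..} r * g r + indicator {0..t} r * g r \<partial>lborel)"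
  proof (rule nn_integral_cong_AE)
    show "AE r in lborel. indicator {0..} r * g r = indicator {t..} r * g r + indicator {0..t} r * g r"
      using AE_lborel_singleton[of t]
    proof eventually_elim
      case (elim r)
      show ?case
      proof (cases "r < 0")
        case True then show ?thesis using t by (simp add: indicator_def)
      next
        case False
        show ?thesis
        proof (cases "r < t")
          case True then show ?thesis using False by (simp add: indicator_def)
        next
          case False2: False
          then have "t < r" using elim by simp
          then show ?thesis using False t by (simp add: indicator_def)
        qed
      qed
    qed
  qed
  also have "\<dots> = (\<integral>\<^sup>+ r. indicator {t..} r * g r \<partial>lborel) + (\<integral>\<^sup>+ r. indicator {0..t} r * g r \<partial>lborel)"
  proof (rule nn_integral_add)
    have "(\<lambda>r::real. indicator {t..} r * g r) \<in> borel_measurable borel" using g by measurable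
    then show "(\<lambda>r::real. indicator {t..} r * g r) \<in> borel_measurable lborel" by simp
    have "(\<lambda>r::real. indicator {0..t} r * g r) \<in> borel_measurable borel" using g by measurable
    then show "(\<lambda>r::real. indicator {0..t} r * g r) \<in> borel_measurable lborel" by simp
  qed
  finally show ?thesis .
qed

lemma K_shift:
  assumes "B \<subseteq> Rp2" "0 \<le> t" "0 \<le> r"
  shows "K k w (shift B (t, t) \<inter> Rp2) r = K k w B (r + t)"
proof -
  have "(w - r, v - r) \<in> shift B (t, t) \<inter> Rp2 \<longleftrightarrow> (w - (r + t), v - (r + t)) \<in> B" for v
  proof -
    have e: "(w - r, v - r) - (t, t) = (w - (r + t), v - (r + t))" by simp
    have "(w - r, v - r) \<in> Rp2" if "(w - (r + t), v - (r + t)) \<in> B"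
    proof -
      have "(w - (r + t), v - (r + t)) \<in> Rp2" using that assms(1) by blast
      then show ?thesis using assms(2) by (simp add: Rp2_def)
    qed
    then show ?thesis by (auto simp: shift_def e diff_diff_eq)
  qed
  then have "{v. (w - r, v - r) \<in> shift B (t, t) \<inter> Rp2} = {v. (w - (r + t), v - (r + t)) \<in> B}"
    by blast
  then show ?thesis by (simp add: K_def)
qed

lemma mw_fluid:
  assumes B: "B \<in> sets borel" "B \<subseteq> Rp2" and w: "0 < w" and t: "0 \<le> t"
  shows "emeasure (mw w k) B = emeasure (mw w k) (shift B (t, t)) +
     ennreal (lam k) * (\<integral>\<^sup>+ s \<in> {0..t}. emeasure (delta_plus w \<Otimes>\<^sub>M Gam k) (shift B (t - s, t - s)) \<partial>lborel)"
proof -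
  have Km: "K k w B \<in> borel_measurable borel" by (rule K_meas[OF B(1)])
  have sB: "shift B (t, t) \<in> sets borel" by (rule shift_sets[OF B(1)])
  have "emeasure (mw w k) (shift B (t, t)) = ennreal (lam k) * (\<integral>\<^sup>+ r. indicator {0..} r * K k w (shift B (t, t) \<inter> Rp2) r \<partial>lborel)"
    by (rule mw_emeasure[OF sB])
  also have "(\<integral>\<^sup>+ r. indicator {0..} r * K k w (shift B (t, t) \<inter> Rp2) r \<partial>lborel) = (\<integral>\<^sup>+ r. indicator {0..} r * K k w B (r + t) \<partial>lborel)"
    by (intro nn_integral_cong) (auto simp: indicator_def K_shift[OF B(2) t])
  also have "\<dots> = (\<integral>\<^sup>+ r. indicator {t..} r * K k w B r \<partial>lborel)"
    by (rule trans_int[OF Km])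
  finally have e1: "emeasure (mw w k) (shift B (t, t)) = ennreal (lam k) * (\<integral>\<^sup>+ r. indicator {t..} r * K k w B r \<partial>lborel)" .
  have "(\<integral>\<^sup>+ s \<in> {0..t}. emeasure (delta_plus w \<Otimes>\<^sub>M Gam k) (shift B (t - s, t - s)) \<partial>lborel) = (\<integral>\<^sup>+ s \<in> {0..t}. K k w B (t - s) \<partial>lborel)"
    by (intro nn_integral_cong) (simp add: fluid_integrand[OF B(1)] w)
  also have "\<dots> = (\<integral>\<^sup>+ r. indicator {0..t} r * K k w B r \<partial>lborel)"
    by (rule reflect_int[OF Km])
  finally have e2: "(\<integral>\<^sup>+ s \<in> {0..t}. emeasure (delta_plus w \<Otimes>\<^sub>M Gam k) (shift B (t - s, t - s)) \<partial>lborel) = (\<integral>\<^sup>+ r. indicator {0..t} r * K k w B r \<partial>lborel)" .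
  show ?thesis
    unfolding e1 e2 mw_emeasure'[OF B] split_int[OF Km t] by (simp add: distrib_left)
qed

end

context qs begin

lemma emeasure_Gam: "emeasure (Gam k) A = ennreal (measure (Gam k) A)"
proof -
  interpret prob_space "Gam k" by (rule Gam_prob)
  show ?thesis by (simp add: emeasure_eq_measure)
qed

lemma h_meas:
  assumes D: "D \<in> sets (borel :: real measure)"
  shows "(\<lambda>r. measure (Gam k) {v. v - r \<in> D}) \<in> borel_measurable borel"
proof -
  interpret G: prob_space "Gam k" by (rule Gam_prob)
  have "(\<lambda>p::real\<times>real. snd p - fst p) -` D \<inter> space borel \<in> sets borel"
    by (rule measurable_sets[OF _ D]) measurable
  then have Q: "{p::real\<times>real. snd p - fst p \<in> D} \<in> sets (borel \<Otimes>\<^sub>M Gam k)"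
    by (simp add: vimage_def)
  have "(\<lambda>r. emeasure (Gam k) (Pair r -` {p::real\<times>real. snd p - fst p \<in> D})) \<in> borel_measurable borel"
    by (rule G.measurable_emeasure_Pair[OF Q])
  then have "(\<lambda>r. enn2real (emeasure (Gam k) {v. v - r \<in> D})) \<in> borel_measurable borel"
    by (simp add: vimage_def)
  then show ?thesis by (simp add: measure_def)
qed

lemma rect_sets:
  assumes D: "D \<in> sets (borel :: real measure)"
  shows "({a..<b} \<times> D) \<in> sets (borel :: (real \<times> real) measure)"
proof -
  have "({a..<b} \<times> D) \<in> sets (borel \<Otimes>\<^sub>M (borel :: real measure))"
    using D by (intro pair_measureI) auto
  then show ?thesis unfolding borel_prod .
qed

lemma mw_rect_gen:
  assumes ab: "0 \<le> a" "a < b" "b \<le> w" and D: "D \<in> sets borel" "D \<subseteq> {0..}"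
  shows "measure (mw w k) ({a..<b} \<times> D) =
    lam k * (\<integral>u\<in>{w - b..w - a}. measure (Gam k) {v. v - u \<in> D} \<partial>lborel)"
proof -
  let ?h = "\<lambda>r. measure (Gam k) {v. v - r \<in> D}"
  have R: "{a..<b} \<times> D \<in> sets borel" by (rule rect_sets[OF D(1)])
  have Rs: "{a..<b} \<times> D \<subseteq> Rp2" using ab D by (auto simp: Rp2_def)
  have AE: "AE r in lborel. indicator {0..} r * K k w ({a..<b} \<times> D) r = ennreal (indicator {w - b..w - a} r *\<^sub>R ?h r)"
    using AE_lborel_singleton[of "w - b"]
  proof eventually_elim
    case (elim r)
    show ?case
    proof (cases "a \<le> w - r \<and> w - r < b")
      case True
      then have "0 \<le> r" "r \<in> {w - b..w - a}" using ab by auto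
      moreover have "{v. (w - r, v - r) \<in> {a..<b} \<times> D} = {v. v - r \<in> D}" using True by auto
      ultimately show ?thesis by (simp add: K_def emeasure_Gam indicator_def)
    next
      case False
      then have e: "{v. (w - r, v - r) \<in> {a..<b} \<times> D} = {}" by auto
      have "K k w ({a..<b} \<times> D) r = 0" by (simp only: K_def e emeasure_empty)
      moreover have "r \<notin> {w - b..w - a}" using False elim by auto
      ultimately show ?thesis by simp
    qed
  qed
  have hm: "(\<lambda>r. indicator {w - b..w - a} r *\<^sub>R ?h r) \<in> borel_measurable lborel"
    using h_meas[OF D(1), of k] by measurable
  have "measure (mw w k) ({a..<b} \<times> D) = enn2real (ennreal (lam k) * (\<integral>\<^sup>+ r. indicator {0..} r * K k w ({a..<b} \<times> D) r \<partial>lborel))"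
    by (simp add: measure_def mw_emeasure'[OF R Rs])
  also have "\<dots> = lam k * enn2real (\<integral>\<^sup>+ r. indicator {0..} r * K k w ({a..<b} \<times> D) r \<partial>lborel)"
    using lam_pos[of k] by (simp add: enn2real_mult)
  also have "enn2real (\<integral>\<^sup>+ r. indicator {0..} r * K k w ({a..<b} \<times> D) r \<partial>lborel) = (\<integral>r. indicator {w - b..w - a} r *\<^sub>R ?h r \<partial>lborel)"
    by (rule enn2real_nn_integral_eq_integral[OF AE _ hm]) auto
  finally show ?thesis by (simp add: set_lebesgue_integral_def)
qed

lemma mw_rect1:
  assumes "0 \<le> a" "a < b" "b \<le> w" "0 \<le> c" "c < d"
  shows "measure (mw w k) ({a..<b} \<times> {c..<d}) =
    lam k * (\<integral>u\<in>{w - b..w - a}. measure (Gam k) {c + u..<d + u} \<partial>lborel)"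
proof -
  have e: "{v. v - u \<in> {c..<d}} = {c + u..<d + u}" for u by auto
  have "{c..<d} \<in> sets borel" "{c..<d} \<subseteq> {0..}" using assms(4) by auto
  from mw_rect_gen[OF assms(1-3) this, of k] show ?thesis unfolding e .
qed

lemma mw_rect2:
  assumes "0 \<le> a" "a < b" "b \<le> w" "0 \<le> c"
  shows "measure (mw w k) ({a..<b} \<times> {c..}) =
    lam k * (\<integral>u\<in>{w - b..w - a}. measure (Gam k) {c + u..} \<partial>lborel)"
proof -
  have e: "{v. v - u \<in> {c..}} = {c + u..}" for u by auto
  have "{c..} \<in> sets borel" "{c..} \<subseteq> {0..}" using assms(4) by auto
  from mw_rect_gen[OF assms(1-3) this, of k] show ?thesis unfolding e .
qed

lemma mw_top:
  shows "emeasure (mw w k) ({w..} \<times> {0..}) = 0"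
proof -
  have S: "({w..} \<times> {0..} :: (real \<times> real) set) \<in> sets borel"
  proof -
    have "({w..} \<times> {0..} :: (real \<times> real) set) \<in> sets (borel \<Otimes>\<^sub>M (borel :: real measure))"
      by (intro pair_measureI) auto
    then show ?thesis unfolding borel_prod .
  qed
  have "(\<integral>\<^sup>+ r. indicator {0..} r * K k w ({w..} \<times> {0..} \<inter> Rp2) r \<partial>lborel) = (\<integral>\<^sup>+ r. (0::ennreal) \<partial>(lborel::real measure))"
  proof (rule nn_integral_cong_AE)
    show "AE r in lborel. indicator {0..} r * K k w ({w..} \<times> {0..} \<inter> Rp2) r = 0"
      using AE_lborel_singleton[of 0]
    proof eventually_elim
      case (elim r)
      show ?case
      proof (cases "0 < r")
        case True
        then have e: "{v. (w - r, v - r) \<in> {w..} \<times> {0..} \<inter> Rp2} = {}" by auto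
        have "K k w ({w..} \<times> {0..} \<inter> Rp2) r = 0" by (simp only: K_def e emeasure_empty)
        then show ?thesis by simp
      next
        case False then show ?thesis using elim by (simp add: indicator_def)
      qed
    qed
  qed
  then show ?thesis by (simp add: mw_emeasure[OF S])
qed

lemma Cset_sets: "Cset \<in> sets (borel :: (real \<times> real) measure)"
proof -
  have "{x \<in> space borel. (0 \<le> fst x \<and> snd x = 0) \<or> (fst x = 0 \<and> 0 \<le> snd x)} \<in> sets (borel :: (real \<times> real) measure)"
    by measurable
  then show ?thesis by (simp add: Cset_def)
qed

lemma mw_Cset:
  shows "emeasure (mw w k) (shift Cset x) = 0"
proof -
  have S: "shift Cset x \<in> sets borel" by (rule shift_sets[OF Cset_sets])
  have "(\<integral>\<^sup>+ r. indicator {0..} r * K k w (shift Cset x \<inter> Rp2) r \<partial>lborel) = (\<integral>\<^sup>+ r. (0::ennreal) \<partial>(lborel::real measure))"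
  proof (rule nn_integral_cong_AE)
    show "AE r in lborel. indicator {0..} r * K k w (shift Cset x \<inter> Rp2) r = 0"
      using AE_lborel_singleton[of "w - fst x"]
    proof eventually_elim
      case (elim r)
      have "{v. (w - r, v - r) \<in> shift Cset x \<inter> Rp2} \<subseteq> {snd x + r}"
        using elim by (auto simp: shift_def Cset_def)
      then have "K k w (shift Cset x \<inter> Rp2) r \<le> emeasure (Gam k) {snd x + r}"
        unfolding K_def by (intro emeasure_mono) auto
      also have "\<dots> = 0" using Gam_cont by (simp add: emeasure_Gam)
      finally show ?case by simp
    qed
  qed
  then show ?thesis by (simp add: mw_emeasure[OF S])
qed

lemma Gpos: "\<exists>\<delta>>0. \<forall>r\<le>\<delta>. 1/2 \<le> Gbar (Gam k) r"
proof -
  have "eventually (\<lambda>x. 1/2 < Gbar (Gam k) x) (at 0)"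
    using order_tendstoD(1)[OF Gbar_cont[where k=k and u=0, unfolded isCont_def], of "1/2"] Gbar_0 by simp
  then obtain d where d: "d > 0" "\<And>x. x \<noteq> 0 \<Longrightarrow> dist x 0 < d \<Longrightarrow> 1/2 < Gbar (Gam k) x"
    by (auto simp: eventually_at)
  have "1/2 < Gbar (Gam k) (d/2)" using d by auto
  moreover have "Gbar (Gam k) (d/2) \<le> Gbar (Gam k) r" if "r \<le> d/2" for r
    using Gbar_mono[OF that] .
  ultimately have "\<forall>r\<le>d/2. 1/2 \<le> Gbar (Gam k) r" by force
  then show ?thesis using d(1) by (intro exI[of _ "d/2"]) auto
qed

lemma int_pos:
  fixes g :: "real \<Rightarrow> ennreal"
  assumes "0 < \<delta>" "\<And>r. 0 \<le> r \<Longrightarrow> r \<le> \<delta> \<Longrightarrow> c \<le> g r" "0 < c"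
  shows "0 < (\<integral>\<^sup>+ r. indicator {0..} r * g r \<partial>lborel)"
proof -
  have "c * ennreal \<delta> \<le> (\<integral>\<^sup>+ r. c * indicator {0..\<delta>} r \<partial>lborel)"
    using assms(1) by (simp add: nn_integral_cmult_indicator)
  also have "\<dots> \<le> (\<integral>\<^sup>+ r. indicator {0..} r * g r \<partial>lborel)"
    by (intro nn_integral_mono) (auto simp: indicator_def assms(2))
  finally have le: "c * ennreal \<delta> \<le> (\<integral>\<^sup>+ r. indicator {0..} r * g r \<partial>lborel)" .
  have "0 < c * ennreal \<delta>" using assms by (simp add: ennreal_zero_less_mult_iff)
  then show ?thesis using le by (rule less_le_trans)
qed

lemma mw_pos:
  assumes "0 \<le> x" "x < w"
  shows "0 < emeasure (mw w k) ({x..} \<times> {0..})"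
proof -
  obtain \<delta> where d: "\<delta> > 0" "\<And>r. r \<le> \<delta> \<Longrightarrow> 1/2 \<le> Gbar (Gam k) r" using Gpos by blast
  have S: "({x..} \<times> {0..} :: (real \<times> real) set) \<in> sets borel"
  proof -
    have "({x..} \<times> {0..} :: (real \<times> real) set) \<in> sets (borel \<Otimes>\<^sub>M (borel :: real measure))"
      by (intro pair_measureI) auto
    then show ?thesis unfolding borel_prod .
  qed
  have Ss: "{x..} \<times> {0..} \<subseteq> Rp2" using assms by (auto simp: Rp2_def)
  have "0 < (\<integral>\<^sup>+ r. indicator {0..} r * K k w ({x..} \<times> {0..}) r \<partial>lborel)"
  proof (rule int_pos[where \<delta>="min \<delta> (w - x)" and c="ennreal (1/2)"])
    fix r :: real assume r: "0 \<le> r" "r \<le> min \<delta> (w - x)"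
    then have "{v. (w - r, v - r) \<in> {x..} \<times> {0..}} = {r..}" by auto
    then have Keq: "K k w ({x..} \<times> {0..}) r = ennreal (Gbar (Gam k) r)"
      by (simp add: K_def emeasure_Gam Gbar_meas2)
    have "1/2 \<le> Gbar (Gam k) r" using d r by auto
    then have "ennreal (1/2) \<le> ennreal (Gbar (Gam k) r)" by (rule ennreal_leI)
    then show "ennreal (1/2) \<le> K k w ({x..} \<times> {0..}) r" by (subst Keq)
  qed (use d assms in \<open>auto simp: ennreal_inverse_positive\<close>)
  then show ?thesis using lam_pos[of k] by (simp add: mw_emeasure'[OF S Ss] ennreal_zero_less_mult_iff)
qed

end


definition RE :: "(real \<times> real) set set" where
  "RE = {A \<times> B | A B. A \<in> range (\<lambda>(a, b). {a..<b::real}) \<and> B \<in> range (\<lambda>(a, b). {a..<b::real})}"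

lemma sets_borel_RE: "sets (borel :: (real \<times> real) measure) = sigma_sets UNIV RE"
proof -
  let ?Ea = "range (\<lambda>(a, b). {a..<b::real})"
  let ?Ca = "range (\<lambda>n::nat. {- real n..<real n})"
  have Ea: "?Ea \<subseteq> Pow (space (borel :: real measure))" by auto
  have Eb: "sets (borel :: real measure) = sigma_sets (space borel) ?Ea"
    by (subst borel_eq_atLeastLessThan) (simp add: sets_measure_of)
  have Ca: "countable ?Ca" "?Ca \<subseteq> ?Ea" "\<Union>?Ca = space (borel :: real measure)"
  proof -
    show "countable ?Ca" by simp
    show "?Ca \<subseteq> ?Ea"
    proof
      fix X assume "X \<in> ?Ca"
      then obtain n where n: "X = {- real n..<real n}" by auto
      show "X \<in> ?Ea" unfolding n using rangeI[of "\<lambda>(a, b). {a..<b::real}" "(- real n, real n)"] by simp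
    qed
    show "\<Union>?Ca = space (borel :: real measure)"
    proof -
      have "x \<in> \<Union>?Ca" for x :: real
      proof -
        obtain n :: nat where "\<bar>x\<bar> < real n" using reals_Archimedean2 by blast
        then show ?thesis by (auto intro!: exI[of _ n])
      qed
      then show ?thesis by auto
    qed
  qed
  have "sets (borel \<Otimes>\<^sub>M (borel :: real measure)) = sets (sigma (space borel \<times> space borel) {a \<times> b | a b. a \<in> ?Ea \<and> b \<in> ?Ea})"
    by (rule sets_pair_eq[OF Ea Eb Ca Ea Eb Ca])
  also have "\<dots> = sigma_sets UNIV RE"
    by (subst sets_measure_of) (auto simp: RE_def)
  finally show ?thesis unfolding borel_prod .
qed

lemma RE_mem: "{a..<b} \<times> {c..<d} \<in> RE"
proof -
  have 1: "{a..<b} \<in> range (\<lambda>(a, b). {a..<b::real})" using rangeI[of "\<lambda>(a, b). {a..<b::real}" "(a, b)"] by simp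
  have 2: "{c..<d} \<in> range (\<lambda>(a, b). {a..<b::real})" using rangeI[of "\<lambda>(a, b). {a..<b::real}" "(c, d)"] by simp
  show ?thesis unfolding RE_def by (intro CollectI exI[of _ "{a..<b}"] exI[of _ "{c..<d}"] conjI refl 1 2)
qed

lemma RE_cases: "X \<in> RE \<Longrightarrow> \<exists>a b c d. X = {a..<b} \<times> {c..<d}"
  unfolding RE_def by auto

lemma Int_stable_RE: "Int_stable RE"
proof (rule Int_stableI)
  fix X Y assume "X \<in> RE" "Y \<in> RE"
  then obtain a b c d a' b' c' d' where "X = {a..<b} \<times> {c..<d}" "Y = {a'..<b'} \<times> {c'..<d'}"
    using RE_cases by metis
  then have "X \<inter> Y = {max a a'..<min b b'} \<times> {max c c'..<min d d'}" by auto
  then show "X \<inter> Y \<in> RE" by (simp add: RE_mem)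
qed

lemma M2_eqI:
  assumes m1: "m1 \<in> M2" and m2: "m2 \<in> M2"
    and eq: "\<And>a b c d. a < b \<Longrightarrow> c < d \<Longrightarrow> emeasure m1 ({a..<b} \<times> {c..<d}) = emeasure m2 ({a..<b} \<times> {c..<d})"
  shows "m1 = m2"
proof (rule measure_eqI_generator_eq[OF Int_stable_RE, of UNIV])
  show "RE \<subseteq> Pow UNIV" by auto
  show "sets m1 = sigma_sets UNIV RE" using m1 by (simp add: M2_def sets_borel_RE)
  show "sets m2 = sigma_sets UNIV RE" using m2 by (simp add: M2_def sets_borel_RE)
  fix X assume "X \<in> RE"
  then obtain a b c d where X: "X = {a..<b} \<times> {c..<d}" using RE_cases by metis
  show "emeasure m1 X = emeasure m2 X"
  proof (cases "a < b \<and> c < d")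
    case True then show ?thesis using eq X by simp
  next
    case False then have "X = {}" using X by auto
    then show ?thesis by simp
  qed
next
  let ?A = "\<lambda>n::nat. {- real n..<real n} \<times> {- real n..<real n}"
  show "range ?A \<subseteq> RE" using RE_mem by auto
  show "(\<Union>i. ?A i) = UNIV"
  proof -
    have "p \<in> (\<Union>i. ?A i)" for p :: "real \<times> real"
    proof -
      obtain n :: nat where "\<bar>fst p\<bar> + \<bar>snd p\<bar> < real n" using reals_Archimedean2 by blast
      then show ?thesis by (cases p) (auto intro!: exI[of _ n])
    qed
    then show ?thesis by auto
  qed
  fix i
  have "emeasure m1 (?A i) \<le> emeasure m1 UNIV"
    by (rule emeasure_mono) (use m1 in \<open>auto simp: M2_def\<close>)
  also have "\<dots> < \<infinity>" using m1 by (simp add: M2_def)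
  finally show "emeasure m1 (?A i) \<noteq> \<infinity>" by simp
qed

lemma prod_sets: "A \<in> sets borel \<Longrightarrow> B \<in> sets borel \<Longrightarrow> A \<times> B \<in> sets (borel :: (real \<times> real) measure)"
proof -
  assume "A \<in> sets borel" "B \<in> sets borel"
  then have "A \<times> B \<in> sets (borel \<Otimes>\<^sub>M (borel :: real measure))" by (rule pair_measureI)
  then show ?thesis unfolding borel_prod .
qed

context qs begin

definition Pth :: "real \<Rightarrow> 'k \<Rightarrow> (real \<times> real) measure \<Rightarrow> bool" where
  "Pth w k m \<longleftrightarrow> m \<in> M2 \<and> emeasure m ({w..} \<times> {0..}) = 0 \<and>
     (\<forall>a b c d. 0 \<le> a \<and> a < b \<and> b \<le> w \<and> 0 \<le> c \<and> c < d \<longrightarrow>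
        measure m ({a..<b} \<times> {c..<d}) =
          lam k * (\<integral>u\<in>{w - b..w - a}. measure (Gam k) {c + u..<d + u} \<partial>lborel)) \<and>
     (\<forall>a b c. 0 \<le> a \<and> a < b \<and> b \<le> w \<and> 0 \<le> c \<longrightarrow>
        measure m ({a..<b} \<times> {c..}) =
          lam k * (\<integral>u\<in>{w - b..w - a}. measure (Gam k) {c + u..} \<partial>lborel))"

lemma theta_w_eq: "theta_w lam Gam w k = (THE m. Pth w k m)"
  by (simp add: theta_w_def Pth_def)

lemma red:
  assumes m: "m \<in> M2" and top: "emeasure m ({w..} \<times> {0..}) = 0"
  shows "emeasure m ({a..<b} \<times> {c..<d}) = emeasure m ({max a 0..<min b w} \<times> {max c 0..<d})"
proof (rule antisym)
  have sm: "sets m = sets borel" using m by (simp add: M2_def)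
  have out: "emeasure m (UNIV - Rp2) = 0" using m by (simp add: M2_def)
  let ?X1 = "{max a 0..<min b w} \<times> {max c 0..<d}"
  let ?X2 = "{max (max a 0) w..<b} \<times> {max c 0..<d}"
  have S1: "?X1 \<in> sets m" "?X2 \<in> sets m" "(UNIV - Rp2) \<in> sets m"
    using sm rect_sets[of "{max c 0..<d}"] Rp2_sets by auto
  have sub: "{a..<b} \<times> {c..<d} \<subseteq> ?X1 \<union> ?X2 \<union> (UNIV - Rp2)"
    by (auto simp: Rp2_def)
  have "emeasure m ({a..<b} \<times> {c..<d}) \<le> emeasure m (?X1 \<union> ?X2 \<union> (UNIV - Rp2))"
    by (rule emeasure_mono[OF sub]) (use S1 in auto)
  also have "\<dots> \<le> emeasure m (?X1 \<union> ?X2) + emeasure m (UNIV - Rp2)"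
    by (rule emeasure_subadditive) (use S1 in auto)
  also have "\<dots> \<le> emeasure m ?X1 + emeasure m ?X2 + emeasure m (UNIV - Rp2)"
    by (intro add_right_mono emeasure_subadditive) (use S1 in auto)
  also have "emeasure m ?X2 \<le> emeasure m ({w..} \<times> {0..})"
  proof (rule emeasure_mono)
    show "?X2 \<subseteq> {w..} \<times> {0..}" by auto
    show "{w..} \<times> {0..} \<in> sets m" using sm prod_sets[of "{w..}" "{0..}"] by simp
  qed
  then have "emeasure m ?X2 = 0" using top by simp
  finally show "emeasure m ({a..<b} \<times> {c..<d}) \<le> emeasure m ?X1" using out by simp
  show "emeasure m ?X1 \<le> emeasure m ({a..<b} \<times> {c..<d})"
    by (rule emeasure_mono) (use sm rect_sets[of "{c..<d}"] in auto)
qed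

lemma M2_fin: "m \<in> M2 \<Longrightarrow> A \<in> sets m \<Longrightarrow> emeasure m A = ennreal (measure m A)"
proof -
  assume m: "m \<in> M2" and A: "A \<in> sets m"
  have "emeasure m A \<le> emeasure m UNIV"
    by (rule emeasure_mono) (use m A in \<open>auto simp: M2_def\<close>)
  then have "emeasure m A \<noteq> \<infinity>" using m by (auto simp: M2_def)
  then show ?thesis by (simp add: emeasure_eq_ennreal_measure)
qed

lemma Pth_unique:
  assumes p1: "Pth w k m1" and p2: "Pth w k m2"
  shows "m1 = m2"
proof (rule M2_eqI)
  show "m1 \<in> M2" "m2 \<in> M2" using p1 p2 by (auto simp: Pth_def)
  fix a b c d :: real assume "a < b" "c < d"
  have s1: "sets m1 = sets borel" "sets m2 = sets borel" using p1 p2 by (auto simp: Pth_def M2_def)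
  let ?X1 = "{max a 0..<min b w} \<times> {max c 0..<d}"
  have X: "?X1 \<in> sets borel" by (rule rect_sets) auto
  have "emeasure m1 ({a..<b} \<times> {c..<d}) = emeasure m1 ?X1"
    using p1 by (intro red) (auto simp: Pth_def)
  moreover have "emeasure m2 ({a..<b} \<times> {c..<d}) = emeasure m2 ?X1"
    using p2 by (intro red) (auto simp: Pth_def)
  moreover have "emeasure m1 ?X1 = emeasure m2 ?X1"
  proof (cases "max a 0 < min b w \<and> max c 0 < d")
    case True
    have cond: "0 \<le> max a 0 \<and> max a 0 < min b w \<and> min b w \<le> w \<and> 0 \<le> max c 0 \<and> max c 0 < d"
      using True by auto
    have q1: "\<forall>a b c d. 0 \<le> a \<and> a < b \<and> b \<le> w \<and> 0 \<le> c \<and> c < d \<longrightarrow>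
        measure m1 ({a..<b} \<times> {c..<d}) = lam k * (\<integral>u\<in>{w - b..w - a}. measure (Gam k) {c + u..<d + u} \<partial>lborel)"
      using p1 unfolding Pth_def by blast
    have q2: "\<forall>a b c d. 0 \<le> a \<and> a < b \<and> b \<le> w \<and> 0 \<le> c \<and> c < d \<longrightarrow>
        measure m2 ({a..<b} \<times> {c..<d}) = lam k * (\<integral>u\<in>{w - b..w - a}. measure (Gam k) {c + u..<d + u} \<partial>lborel)"
      using p2 unfolding Pth_def by blast
    have "measure m1 ?X1 = measure m2 ?X1"
      using q1[rule_format, OF cond] q2[rule_format, OF cond] by simp
    moreover have "emeasure m1 ?X1 = ennreal (measure m1 ?X1)" "emeasure m2 ?X1 = ennreal (measure m2 ?X1)"
      using p1 p2 X s1 by (auto simp: Pth_def intro!: M2_fin)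
    ultimately show ?thesis by simp
  next
    case False
    have "?X1 = {}"
    proof (cases "max a 0 < min b w")
      case True with False have "\<not> max c 0 < d" by simp
      then show ?thesis by auto
    next
      case False then show ?thesis by auto
    qed
    then show ?thesis by (metis emeasure_empty)
  qed
  ultimately show "emeasure m1 ({a..<b} \<times> {c..<d}) = emeasure m2 ({a..<b} \<times> {c..<d})" by simp
qed

lemma Pth_mw: "0 \<le> w \<Longrightarrow> Pth w k (mw w k)"
  unfolding Pth_def using mw_M2 mw_top mw_rect1 mw_rect2 by auto

lemma theta_mw: "0 \<le> w \<Longrightarrow> theta_w lam Gam w k = mw w k"
proof -
  assume w: "0 \<le> w"
  show ?thesis unfolding theta_w_eq
  proof (rule the_equality[where P="Pth w k"])
    show "Pth w k (mw w k)" using w by (rule Pth_mw)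
    fix m assume "Pth w k m"
    then show "m = mw w k" using Pth_unique Pth_mw[OF w] by blast
  qed
qed

end

context qs begin

lemma mw_tail: "w \<le> x \<Longrightarrow> emeasure (mw w k) ({x..} \<times> {0..}) = 0"
proof -
  assume wx: "w \<le> x"
  have "{w..} \<times> {0..} \<in> sets (mw w k)" using prod_sets[of "{w..}" "{0..}"] by simp
  then have "emeasure (mw w k) ({x..} \<times> {0..}) \<le> emeasure (mw w k) ({w..} \<times> {0..})"
    by (rule emeasure_mono[rotated]) (use wx in auto)
  then show ?thesis using mw_top[of w k] by simp
qed

lemma wset_mw:
  assumes w: "0 < w"
  shows "wset (\<lambda>k. mw w k) = {0..<w}"
proof (intro set_eqI)
  fix x
  show "x \<in> wset (\<lambda>k. mw w k) \<longleftrightarrow> x \<in> {0..<w}"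
  proof
    assume "x \<in> wset (\<lambda>k. mw w k)"
    then have x: "0 \<le> x" "0 < (\<Sum>k\<in>UNIV. emeasure (mw w k) ({x..} \<times> {0..}))"
      unfolding wset_def plus_em_def by simp_all
    have "x < w"
    proof (rule ccontr)
      assume "\<not> x < w"
      then have "\<And>k. emeasure (mw w k) ({x..} \<times> {0..}) = 0" using mw_tail by simp
      then have "(\<Sum>k\<in>UNIV. emeasure (mw w k) ({x..} \<times> {0..})) = 0" by simp
      with x show False by simp
    qed
    with x show "x \<in> {0..<w}" by simp
  next
    assume x: "x \<in> {0..<w}"
    obtain k0 :: 'k where True by simp
    have "0 < emeasure (mw w k0) ({x..} \<times> {0..})" using mw_pos x by simp
    also have "\<dots> \<le> (\<Sum>k\<in>UNIV. emeasure (mw w k) ({x..} \<times> {0..}))"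
      by (rule member_le_sum) simp_all
    finally show "x \<in> wset (\<lambda>k. mw w k)" using x unfolding wset_def plus_em_def by simp
  qed
qed

lemma wth_mw:
  assumes w: "0 < w"
  shows "w_th (\<lambda>k. mw w k) = w"
proof -
  have S: "insert 0 (wset (\<lambda>k. mw w k)) = {0..<w}" using wset_mw[OF w] w by auto
  show ?thesis unfolding w_th_def S using w by (simp add: cSup_atLeastLessThan)
qed

lemma Gbar_pos_ex: assumes "f w = 1" shows "\<exists>k. 0 < Gbar (Gam k) w"
proof (rule ccontr)
  assume "\<not> (\<exists>k. 0 < Gbar (Gam k) w)"
  then have "\<And>k. Gbar (Gam k) w = 0" using Gbar_nonneg by (metis less_eq_real_def)
  then have "f w = 0" by (simp add: f_def)
  with assms show False by simp
qed

lemma Istates_mw: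
  assumes fw: "f w = 1"
  shows "(\<lambda>k. mw w k) \<in> Istates Gam"
proof -
  have w: "0 < w" using f1_pos fw .
  obtain k0 where k0: "0 < Gbar (Gam k0) w" using Gbar_pos_ex fw by blast
  have "Max (range (\<lambda>k. Gbar (Gam k) (w - e))) > 0" if e: "e > 0" for e
  proof -
    have "Gbar (Gam k0) w \<le> Gbar (Gam k0) (w - e)" using e by (intro Gbar_mono) simp
    also have "\<dots> \<le> Max (range (\<lambda>k. Gbar (Gam k) (w - e)))" by (rule Max_ge) auto
    finally show ?thesis using k0 by simp
  qed
  moreover have "bdd_above (wset (\<lambda>k. mw w k))" using wset_mw[OF w] by simp
  moreover have "plus_em (\<lambda>k. mw w k) (shift Cset x) = 0" for x
    by (simp add: plus_em_def mw_Cset)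
  ultimately show ?thesis using w by (simp add: Istates_def wth_mw mw_M2)
qed

lemma wsol_const:
  assumes fw: "f w = 1"
  shows "workload_sol lam mu Gam (\<lambda>_. w) w"
proof -
  have w: "0 < w" using f1_pos fw .
  have "(\<Sum>k\<in>UNIV. rho lam mu k * integral {0..t} (\<lambda>s. Gbar (Gam k) w)) = t * f w" if "0 \<le> t" for t
    using that by (simp add: f_def sum_distrib_left algebra_simps)
  then show ?thesis using w fw by (auto simp: workload_sol_def)
qed

lemma invariant_mw:
  assumes fw: "f w = 1"
  shows "invariant_state lam mu Gam (\<lambda>k. mw w k)"
proof -
  have w: "0 < w" using f1_pos fw .
  have "fluid_sol lam mu Gam (\<lambda>k. mw w k) (\<lambda>t. \<lambda>k. mw w k)"
    unfolding fluid_sol_def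
  proof (intro conjI allI impI exI[of _ "\<lambda>_. w"])
    show "workload_sol lam mu Gam (\<lambda>_. w) (w_th (\<lambda>k. mw w k))"
      using wth_mw[OF w] wsol_const[OF fw] by simp
    fix t :: real and k assume "0 \<le> t"
    show "mw w k \<in> M2" using w by (simp add: mw_M2)
  next
    fix k B and t :: real
    assume "B \<in> sets borel \<and> B \<subseteq> Rp2 \<and> 0 \<le> t"
    then show "emeasure (mw w k) B = emeasure (mw w k) (shift B (t, t)) +
       ennreal (lam k) * (\<integral>\<^sup>+ s \<in> {0..t}. emeasure (delta_plus w \<Otimes>\<^sub>M Gam k) (shift B (t - s, t - s)) \<partial>lborel)"
      using mw_fluid w by blast
  qed simp
  then show ?thesis using Istates_mw[OF fw] by (auto simp: invariant_state_def)
qed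

lemma partA:
  assumes "w_l lam mu Gam \<le> w" "w \<le> w_u lam mu Gam"
  shows "invariant_state lam mu Gam (theta_w lam Gam w)"
proof -
  have fw: "f w = 1" using imp_f1 assms .
  have "theta_w lam Gam w = (\<lambda>k. mw w k)"
    using f1_pos[OF fw] by (auto simp: theta_mw)
  then show ?thesis using invariant_mw[OF fw] by simp
qed

end


locale wl = qs lam mu Gam for lam mu :: "'k::finite \<Rightarrow> real" and Gam :: "'k \<Rightarrow> real measure" +
  fixes W :: "real \<Rightarrow> real" and w0 :: real
  assumes ws: "workload_sol lam mu Gam W w0"
begin

lemma W0: "W 0 = w0" using ws by (simp add: workload_sol_def)
lemma W_nonneg: "0 \<le> t \<Longrightarrow> 0 \<le> W t" using ws unfolding workload_sol_def by blast
lemma W_int0: "0 \<le> t \<Longrightarrow> (\<lambda>s. Gbar (Gam k) (W s)) integrable_on {0..t}"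
  using ws unfolding workload_sol_def by blast
lemma W_eq: assumes "0 \<le> t" shows "W t = w0 + (\<Sum>k\<in>UNIV. rho lam mu k * integral {0..t} (\<lambda>s. Gbar (Gam k) (W s))) - t"
proof -
  from ws assms have "W t = W 0 + (\<Sum>k\<in>UNIV. rho lam mu k * integral {0..t} (\<lambda>s. Gbar (Gam k) (W s))) - t"
    unfolding workload_sol_def by blast
  then show ?thesis by (simp only: W0)
qed

lemma int_cmult: "g integrable_on S \<Longrightarrow> (\<lambda>x. c * g x) integrable_on S"
  for g :: "real \<Rightarrow> real" and S
  using integrable_cmul[of g S c] by simp

lemma W_int: "0 \<le> s \<Longrightarrow> s \<le> t \<Longrightarrow> (\<lambda>u. Gbar (Gam k) (W u)) integrable_on {s..t}"
  by (rule integrable_on_subinterval[OF W_int0[of t]]) auto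

lemma fW_int: "0 \<le> s \<Longrightarrow> s \<le> t \<Longrightarrow> (\<lambda>u. f (W u)) integrable_on {s..t}"
proof -
  assume st: "0 \<le> s" "s \<le> t"
  have "(\<lambda>u. \<Sum>k\<in>UNIV. rho lam mu k * Gbar (Gam k) (W u)) integrable_on {s..t}"
    by (intro integrable_sum) (auto intro!: int_cmult W_int st)
  then show ?thesis by (simp add: f_def)
qed

lemma W_inc:
  assumes st: "0 \<le> s" "s \<le> t"
  shows "W t - W s = integral {s..t} (\<lambda>u. f (W u)) - (t - s)"
proof -
  have c: "integral {0..s} (\<lambda>u. Gbar (Gam k) (W u)) + integral {s..t} (\<lambda>u. Gbar (Gam k) (W u))
      = integral {0..t} (\<lambda>u. Gbar (Gam k) (W u))" for k
    by (rule Henstock_Kurzweil_Integration.integral_combine) (use st W_int0[of t k] in auto)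
  have "integral {s..t} (\<lambda>u. f (W u)) = (\<Sum>k\<in>UNIV. integral {s..t} (\<lambda>u. rho lam mu k * Gbar (Gam k) (W u)))"
    unfolding f_def by (rule integral_sum) (auto intro!: int_cmult W_int st)
  also have "\<dots> = (\<Sum>k\<in>UNIV. rho lam mu k * integral {s..t} (\<lambda>u. Gbar (Gam k) (W u)))"
    by simp
  finally have e: "integral {s..t} (\<lambda>u. f (W u)) = (\<Sum>k\<in>UNIV. rho lam mu k * integral {s..t} (\<lambda>u. Gbar (Gam k) (W u)))" .
  have "W t - W s = (\<Sum>k\<in>UNIV. rho lam mu k * (integral {0..t} (\<lambda>u. Gbar (Gam k) (W u)) - integral {0..s} (\<lambda>u. Gbar (Gam k) (W u)))) - (t - s)"
    using W_eq[of t] W_eq[of s] st by (simp add: sum_subtractf right_diff_distrib)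
  also have "\<dots> = (\<Sum>k\<in>UNIV. rho lam mu k * integral {s..t} (\<lambda>u. Gbar (Gam k) (W u))) - (t - s)"
  proof -
    have c': "integral {0..t} (\<lambda>u. Gbar (Gam k) (W u)) - integral {0..s} (\<lambda>u. Gbar (Gam k) (W u))
      = integral {s..t} (\<lambda>u. Gbar (Gam k) (W u))" for k using c[of k] by linarith
    show ?thesis by (simp only: c')
  qed
  finally show ?thesis using e by simp
qed

definition L :: real where "L = (\<Sum>k\<in>UNIV. rho lam mu k) + 1"

lemma L_pos: "0 < L" using rho_gt1 by (simp add: L_def)

lemma f_le_rho: "f u \<le> (\<Sum>k\<in>UNIV. rho lam mu k)"
  unfolding f_def by (intro sum_mono) (use Gbar_le1 rho_pos in \<open>auto intro: mult_left_le less_imp_le\<close>)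

lemma W_bounds:
  assumes st: "0 \<le> s" "s \<le> t"
  shows "W s - (t - s) \<le> W t" "W t \<le> W s + L * (t - s)"
proof -
  have i: "(\<lambda>u. f (W u)) integrable_on {s..t}" by (rule fW_int[OF st])
  have "0 \<le> integral {s..t} (\<lambda>u. f (W u))" by (rule integral_nonneg[OF i]) (simp add: f_nonneg)
  then show "W s - (t - s) \<le> W t" using W_inc[OF st] by simp
  have "integral {s..t} (\<lambda>u. f (W u)) \<le> integral {s..t} (\<lambda>u. (\<Sum>k\<in>UNIV. rho lam mu k))"
    by (rule integral_le[OF i]) (auto simp: f_le_rho)
  also have "\<dots> = (t - s) * (\<Sum>k\<in>UNIV. rho lam mu k)" using st by simp
  finally show "W t \<le> W s + L * (t - s)" using W_inc[OF st] st L_pos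
    by (simp add: L_def algebra_simps)
qed

lemma L_ge1: "1 \<le> L" unfolding L_def using sum_nonneg[of UNIV "rho lam mu"] rho_pos by (simp add: less_imp_le)

lemma W_lip1: assumes "0 \<le> s" "s \<le> t" shows "\<bar>W t - W s\<bar> \<le> L * (t - s)"
proof -
  have "1 * (t - s) \<le> L * (t - s)" using L_ge1 assms by (intro mult_right_mono) auto
  then show ?thesis using W_bounds[OF assms] by (simp add: abs_le_iff)
qed

lemma W_inc_le:
  assumes st: "0 \<le> s" "s \<le> t" and b: "\<And>u. u \<in> {s..t} \<Longrightarrow> f (W u) \<le> c"
  shows "W t - W s \<le> (c - 1) * (t - s)"
proof -
  have "integral {s..t} (\<lambda>u. f (W u)) \<le> integral {s..t} (\<lambda>u. c)"
    by (rule integral_le[OF fW_int[OF st]]) (auto simp: b)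
  then show ?thesis using W_inc[OF st] st by (simp add: algebra_simps)
qed

lemma W_inc_ge:
  assumes st: "0 \<le> s" "s \<le> t" and b: "\<And>u. u \<in> {s..t} \<Longrightarrow> c \<le> f (W u)"
  shows "(c - 1) * (t - s) \<le> W t - W s"
proof -
  have "integral {s..t} (\<lambda>u. c) \<le> integral {s..t} (\<lambda>u. f (W u))"
    by (rule integral_le[OF _ fW_int[OF st]]) (auto simp: b)
  then show ?thesis using W_inc[OF st] st by (simp add: algebra_simps)
qed

end


lemma int_pos2:
  fixes g :: "real \<Rightarrow> ennreal"
  assumes "0 < \<delta>" "\<delta> \<le> T" "\<And>s. T - \<delta> \<le> s \<Longrightarrow> s \<le> T \<Longrightarrow> c \<le> g s" "0 < c"
  shows "0 < (\<integral>\<^sup>+ s\<in>{0..T}. g s \<partial>lborel)"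
proof -
  have "c * ennreal \<delta> = (\<integral>\<^sup>+ s. c * indicator {T - \<delta>..T} s \<partial>lborel)"
    using assms(1) by (simp add: nn_integral_cmult_indicator)
  also have "\<dots> \<le> (\<integral>\<^sup>+ s\<in>{0..T}. g s \<partial>lborel)"
    by (intro nn_integral_mono) (use assms(1,2) in \<open>auto simp: indicator_def assms(3)\<close>)
  finally have le: "c * ennreal \<delta> \<le> (\<integral>\<^sup>+ s\<in>{0..T}. g s \<partial>lborel)" .
  have "0 < c * ennreal \<delta>" using assms by (simp add: ennreal_zero_less_mult_iff)
  then show ?thesis using le by (rule less_le_trans)
qed

locale inv = wl lam mu Gam W w0 for lam mu :: "'k::finite \<Rightarrow> real" and Gam :: "'k \<Rightarrow> real measure"
  and W :: "real \<Rightarrow> real" and w0 :: real +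
  fixes th :: "'k \<Rightarrow> (real \<times> real) measure"
  assumes thI: "th \<in> Istates Gam" and w0_eq: "w0 = w_th th"
    and eqn: "\<And>k B t. B \<in> sets borel \<Longrightarrow> B \<subseteq> Rp2 \<Longrightarrow> 0 \<le> t \<Longrightarrow>
      emeasure (th k) B = emeasure (th k) (shift B (t, t)) +
        ennreal (lam k) * (\<integral>\<^sup>+ s \<in> {0..t}. emeasure (delta_plus (W s) \<Otimes>\<^sub>M Gam k) (shift B (t - s, t - s)) \<partial>lborel)"
begin

lemma th_M2: "th k \<in> M2" using thI by (simp add: Istates_def)
lemma sets_th[simp]: "sets (th k) = sets borel" using th_M2 by (simp add: M2_def)
lemma th_out: "emeasure (th k) (UNIV - Rp2) = 0" using th_M2 by (simp add: M2_def)
lemma bdd_wset: "bdd_above (wset th)" using thI by (simp add: Istates_def)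
lemma bdd_wset': "bdd_above (insert 0 (wset th))" using bdd_wset by simp

lemma w0_nonneg: "0 \<le> w0"
  unfolding w0_eq w_th_def by (rule cSup_upper[OF _ bdd_wset']) simp

lemma T1:
  assumes x: "w0 < x"
  shows "emeasure (th k) ({x..} \<times> {0..}) = 0"
proof -
  have "\<not> 0 < plus_em th ({x..} \<times> {0..})"
  proof
    assume "0 < plus_em th ({x..} \<times> {0..})"
    then have "x \<in> wset th" using x w0_nonneg by (simp add: wset_def)
    then have "x \<le> w0" unfolding w0_eq w_th_def by (intro cSup_upper[OF _ bdd_wset']) simp
    with x show False by simp
  qed
  then have "plus_em th ({x..} \<times> {0..}) = 0" by simp
  moreover have "emeasure (th k) ({x..} \<times> {0..}) \<le> plus_em th ({x..} \<times> {0..})"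
    unfolding plus_em_def by (rule member_le_sum) simp_all
  ultimately show ?thesis by simp
qed

lemma T2:
  assumes x: "0 \<le> x" "x < w0"
  shows "\<exists>k. 0 < emeasure (th k) ({x..} \<times> {0..})"
proof -
  have "x < Sup (insert 0 (wset th))" using x w0_eq by (simp add: w_th_def)
  then obtain z where z: "z \<in> insert 0 (wset th)" "x < z"
    using less_cSup_iff[OF _ bdd_wset'] by blast
  then have zw: "z \<in> wset th" using x by auto
  then have "0 < plus_em th ({z..} \<times> {0..})" by (simp add: wset_def)
  then obtain k where k: "0 < emeasure (th k) ({z..} \<times> {0..})"
    unfolding plus_em_def by (metis not_gr_zero sum.neutral)
  have "emeasure (th k) ({z..} \<times> {0..}) \<le> emeasure (th k) ({x..} \<times> {0..})"
    by (rule emeasure_mono) (use z prod_sets[of "{x..}" "{0..}"] in auto)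
  with k show ?thesis by (intro exI[of _ k]) simp
qed

lemma Tshift:
  assumes B: "B \<subseteq> Rp2" and T: "w0 < T"
  shows "emeasure (th k) (shift B (T, T)) = 0"
proof -
  have "shift B (T, T) \<subseteq> {T..} \<times> {0..}"
  proof
    fix y assume "y \<in> shift B (T, T)"
    then have "y - (T, T) \<in> Rp2" using B by (auto simp: shift_def)
    then show "y \<in> {T..} \<times> {0..}" using T w0_nonneg by (cases y) (auto simp: Rp2_def)
  qed
  then have "emeasure (th k) (shift B (T, T)) \<le> emeasure (th k) ({T..} \<times> {0..})"
    by (rule emeasure_mono) (use prod_sets[of "{T..}" "{0..}"] in auto)
  then show ?thesis using T1[OF T, of k] by simp
qed

lemma Bx_sets: "({x..} \<times> {0..} :: (real \<times> real) set) \<in> sets borel"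
  using prod_sets[of "{x..}" "{0..}"] by simp

lemma Bx_Rp2: "0 \<le> x \<Longrightarrow> {x..} \<times> {0..} \<subseteq> Rp2" by (auto simp: Rp2_def)

lemma integrand_Bx:
  "emeasure (delta_plus y \<Otimes>\<^sub>M Gam k) (shift ({x..} \<times> {0..}) (c, c)) =
    (if 0 < y \<and> x \<le> y - c then ennreal (Gbar (Gam k) c) else 0)"
proof -
  have "K k y ({x..} \<times> {0..}) c = (if x \<le> y - c then ennreal (Gbar (Gam k) c) else 0)"
  proof (cases "x \<le> y - c")
    case True
    then have "{v. (y - c, v - c) \<in> {x..} \<times> {0..}} = {c..}" by auto
    then show ?thesis using True by (simp add: K_def emeasure_Gam Gbar_meas2)
  next
    case False
    then have e: "{v. (y - c, v - c) \<in> {x..} \<times> {0..}} = {}" by auto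
    show ?thesis using False by (simp only: K_def e emeasure_empty if_False)
  qed
  moreover have "emeasure (delta_plus y \<Otimes>\<^sub>M Gam k) (shift ({x..} \<times> {0..}) (c, c)) = (if 0 < y then K k y ({x..} \<times> {0..}) c else 0)"
    by (rule fluid_integrand[OF Bx_sets])
  ultimately show ?thesis by simp
qed

lemma eqn_zero:
  assumes B: "B \<in> sets borel" "B \<subseteq> Rp2" and t: "0 \<le> t" and z: "emeasure (th k) B = 0"
  shows "(\<integral>\<^sup>+ s \<in> {0..t}. emeasure (delta_plus (W s) \<Otimes>\<^sub>M Gam k) (shift B (t - s, t - s)) \<partial>lborel) = 0"
proof -
  have "ennreal (lam k) * (\<integral>\<^sup>+ s \<in> {0..t}. emeasure (delta_plus (W s) \<Otimes>\<^sub>M Gam k) (shift B (t - s, t - s)) \<partial>lborel) = 0"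
    using eqn[OF B t, of k] z by simp
  then show ?thesis using lam_pos[of k] by simp
qed

lemma W_le: assumes T: "0 \<le> T" shows "W T \<le> w0"
proof (rule ccontr)
  assume "\<not> W T \<le> w0"
  then have WT: "w0 < W T" by simp
  define x where "x = (w0 + W T) / 2"
  have x: "w0 < x" "x < W T" "0 \<le> x" using WT w0_nonneg by (auto simp: x_def)
  have T0: "0 < T" using WT W0 T by (cases "T = 0") auto
  obtain k0 :: 'k where True by simp
  obtain \<delta>1 where d1: "\<delta>1 > 0" "\<And>r. r \<le> \<delta>1 \<Longrightarrow> 1/2 \<le> Gbar (Gam k0) r" using Gpos by blast
  define \<delta> where "\<delta> = min (min \<delta>1 T) ((W T - x) / (L + 1))"
  have dpos: "0 < \<delta>" using d1 T0 x L_pos by (simp add: \<delta>_def)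
  have dT: "\<delta> \<le> T" by (simp add: \<delta>_def)
  have "0 < (\<integral>\<^sup>+ s \<in> {0..T}. emeasure (delta_plus (W s) \<Otimes>\<^sub>M Gam k0) (shift ({x..} \<times> {0..}) (T - s, T - s)) \<partial>lborel)"
  proof (rule int_pos2[OF dpos dT _ ])
    fix s assume s: "T - \<delta> \<le> s" "s \<le> T"
    have s0: "0 \<le> s" using s dT by simp
    have "\<bar>W T - W s\<bar> \<le> L * (T - s)" by (rule W_lip1[OF s0 s(2)])
    moreover have "(L + 1) * (T - s) \<le> (L + 1) * \<delta>" using s L_pos by (intro mult_left_mono) auto
    moreover have "(L + 1) * \<delta> \<le> W T - x"
    proof -
      have "\<delta> \<le> (W T - x) / (L + 1)" by (simp add: \<delta>_def)
      then show ?thesis using L_pos by (simp add: field_simps)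
    qed
    ultimately have "x \<le> W s - (T - s)" by (simp add: abs_le_iff algebra_simps)
    moreover have "0 < W s" using \<open>x \<le> W s - (T - s)\<close> x s w0_nonneg by linarith
    ultimately have eq: "emeasure (delta_plus (W s) \<Otimes>\<^sub>M Gam k0) (shift ({x..} \<times> {0..}) (T - s, T - s)) = ennreal (Gbar (Gam k0) (T - s))"
      by (simp add: integrand_Bx)
    have h: "1/2 \<le> Gbar (Gam k0) (T - s)" using d1 s by (intro d1(2)) (simp add: \<delta>_def)
    have g: "ennreal (1/2) \<le> ennreal (Gbar (Gam k0) (T - s))" by (rule ennreal_leI[OF h])
    show "ennreal (1/2) \<le> emeasure (delta_plus (W s) \<Otimes>\<^sub>M Gam k0) (shift ({x..} \<times> {0..}) (T - s, T - s))"
      by (subst eq) (rule g)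
  qed (simp add: ennreal_inverse_positive)
  moreover have "(\<integral>\<^sup>+ s \<in> {0..T}. emeasure (delta_plus (W s) \<Otimes>\<^sub>M Gam k0) (shift ({x..} \<times> {0..}) (T - s, T - s)) \<partial>lborel) = 0"
    by (rule eqn_zero[OF Bx_sets Bx_Rp2[OF x(3)] T T1[OF x(1)]])
  ultimately show False by simp
qed

end

context inv begin

lemma stepF:
  assumes f1: "1 \<le> f w0"
  shows "\<forall>t\<ge>0. W t = w0" "f w0 = 1"
proof -
  have c: "W t = w0" if t: "0 \<le> t" for t
  proof -
    have "(f w0 - 1) * (t - 0) \<le> W t - W 0"
      by (rule W_inc_ge) (use t W_le in \<open>auto intro: f_mono\<close>)
    moreover have "0 \<le> (f w0 - 1) * t" using f1 t by (simp add: mult_nonneg_nonneg)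
    ultimately have "w0 \<le> W t" using W0 by simp
    then show ?thesis using W_le[OF t] by simp
  qed
  then show "\<forall>t\<ge>0. W t = w0" by simp
  have "W 1 - W 0 = integral {0..1} (\<lambda>u. f (W u)) - (1 - 0)" by (rule W_inc) simp_all
  also have "integral {0..1} (\<lambda>u. f (W u)) = integral {0..1} (\<lambda>u::real. f w0)"
    by (rule integral_cong) (simp add: c)
  finally show "f w0 = 1" using c[of 1] W0 by simp
qed

lemma m2_Rp2:
  assumes m: "m \<in> M2" and A: "A \<in> sets borel"
  shows "emeasure m A = emeasure m (A \<inter> Rp2)"
proof (rule antisym)
  have sm: "sets m = sets borel" using m by (simp add: M2_def)
  have S: "A \<inter> Rp2 \<in> sets m" "A - Rp2 \<in> sets m" "UNIV - Rp2 \<in> sets m" using A Rp2_sets sm by auto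
  have "emeasure m A = emeasure m ((A \<inter> Rp2) \<union> (A - Rp2))" by (simp add: Int_Diff_Un)
  also have "\<dots> \<le> emeasure m (A \<inter> Rp2) + emeasure m (A - Rp2)" by (rule emeasure_subadditive) (use S in auto)
  also have "emeasure m (A - Rp2) \<le> emeasure m (UNIV - Rp2)" by (rule emeasure_mono) (use S in auto)
  then have "emeasure m (A - Rp2) = 0" using m by (simp add: M2_def)
  finally show "emeasure m A \<le> emeasure m (A \<inter> Rp2)" by simp
  show "emeasure m (A \<inter> Rp2) \<le> emeasure m A" by (rule emeasure_mono) (use A sm in auto)
qed

lemma shift_sub:
  assumes B: "B \<subseteq> Rp2"
  shows "shift B (T, T) \<subseteq> {T..} \<times> {0..} \<union> {y. 0 \<le> T \<longrightarrow> False}"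
proof
  fix y assume "y \<in> shift B (T, T)"
  then have "y - (T, T) \<in> Rp2" using B by (auto simp: shift_def)
  then show "y \<in> {T..} \<times> {0..} \<union> {y. 0 \<le> T \<longrightarrow> False}" by (cases y) (auto simp: Rp2_def)
qed

lemma th_eq:
  assumes c: "\<forall>t\<ge>0. W t = w0" and f1: "f w0 = 1"
  shows "th k = mw w0 k"
proof (rule measure_eqI)
  have w: "0 < w0" using f1_pos f1 .
  show "sets (th k) = sets (mw w0 k)" by simp
  fix A assume "A \<in> sets (th k)"
  then have A: "A \<in> sets borel" by simp
  let ?B = "A \<inter> Rp2"
  have B: "?B \<in> sets borel" "?B \<subseteq> Rp2" using A Rp2_sets by auto
  define T where "T = w0 + 1"
  have T: "0 \<le> T" "w0 < T" using w by (auto simp: T_def)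
  have sub: "shift ?B (T, T) \<subseteq> {T..} \<times> {0..}" using shift_sub[OF B(2), of T] T by auto
  have z1: "emeasure (th k) (shift ?B (T, T)) = 0" by (rule Tshift[OF B(2) T(2)])
  have "emeasure (mw w0 k) (shift ?B (T, T)) \<le> emeasure (mw w0 k) ({T..} \<times> {0..})"
    by (rule emeasure_mono[OF sub]) (use prod_sets[of "{T..}" "{0..}"] in simp)
  then have z2: "emeasure (mw w0 k) (shift ?B (T, T)) = 0" using mw_tail[of w0 T k] T by simp
  have ieq: "(\<integral>\<^sup>+ s \<in> {0..T}. emeasure (delta_plus (W s) \<Otimes>\<^sub>M Gam k) (shift ?B (T - s, T - s)) \<partial>lborel) =
      (\<integral>\<^sup>+ s \<in> {0..T}. emeasure (delta_plus w0 \<Otimes>\<^sub>M Gam k) (shift ?B (T - s, T - s)) \<partial>lborel)"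
    by (intro nn_integral_cong) (auto simp: indicator_def c)
  have "emeasure (th k) A = emeasure (th k) ?B" by (rule m2_Rp2[OF th_M2 A])
  also have "\<dots> = emeasure (mw w0 k) ?B"
    using eqn[OF B T(1), of k] mw_fluid[OF B w T(1), of k] z1 z2 ieq by simp
  also have "\<dots> = emeasure (mw w0 k) A" by (rule m2_Rp2[OF mw_M2 A, symmetric]) (use w in simp)
  finally show "emeasure (th k) A = emeasure (mw w0 k) A" .
qed

lemma claim_band:
  assumes d0: "0 < d0" and eta: "0 < \<eta>"
    and band: "\<And>u. w0 - 2 * d0 \<le> u \<Longrightarrow> f u \<le> 1 - \<eta>"
    and s1: "d0 / \<eta> \<le> s1"
  shows "W s1 \<le> w0 - d0"
proof (rule ccontr)
  assume "\<not> W s1 \<le> w0 - d0"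
  then have Ws1: "w0 - d0 < W s1" by simp
  have s1pos: "0 \<le> s1" using s1 d0 eta by (meson divide_nonneg_pos less_imp_le order_trans)
  define A where "A = {s. 0 \<le> s \<and> s \<le> s1 \<and> W s \<le> w0 - d0}"
  show False
  proof (cases "A = {}")
    case True
    have "W s1 - W 0 \<le> ((1 - \<eta>) - 1) * (s1 - 0)"
    proof (rule W_inc_le)
      fix u assume u: "u \<in> {0..s1}"
      then have "u \<notin> A" using True by simp
      then have "w0 - d0 < W u" using u by (auto simp: A_def)
      then show "f (W u) \<le> 1 - \<eta>" using d0 by (intro band) simp
    qed (use s1pos in auto)
    then have "W s1 \<le> w0 - \<eta> * s1" using W0 by simp
    moreover have "d0 \<le> \<eta> * s1" using s1 eta by (simp add: field_simps)
    ultimately show False using Ws1 by simp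
  next
    case False
    have bddA: "bdd_above A" by (auto simp: A_def bdd_above_def)
    define \<sigma> where "\<sigma> = Sup A"
    obtain a0 where a0: "a0 \<in> A" using False by blast
    have sig0: "0 \<le> \<sigma>" using cSup_upper[OF a0 bddA] a0 by (simp add: A_def \<sigma>_def)
    have sig1: "\<sigma> \<le> s1" unfolding \<sigma>_def by (rule cSup_least[OF False]) (simp add: A_def)
    have Wsig: "W \<sigma> \<le> w0 - d0"
    proof (rule ccontr)
      assume "\<not> W \<sigma> \<le> w0 - d0"
      then have gt: "w0 - d0 < W \<sigma>" by simp
      define \<epsilon> where "\<epsilon> = (W \<sigma> - (w0 - d0)) / (L + 1)"
      have epos: "0 < \<epsilon>" using gt L_pos by (simp add: \<epsilon>_def)
      have "\<sigma> - \<epsilon> < Sup A" using epos by (simp add: \<sigma>_def)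
      then obtain a where a: "a \<in> A" "\<sigma> - \<epsilon> < a" using less_cSup_iff[OF False bddA] by blast
      have aS: "a \<le> \<sigma>" unfolding \<sigma>_def by (rule cSup_upper[OF a(1) bddA])
      have a0': "0 \<le> a" "W a \<le> w0 - d0" using a by (auto simp: A_def)
      have "\<bar>W \<sigma> - W a\<bar> \<le> L * (\<sigma> - a)" by (rule W_lip1[OF a0'(1) aS])
      also have "\<dots> \<le> L * \<epsilon>" using a aS L_pos by (intro mult_left_mono) auto
      also have "\<dots> < (L + 1) * \<epsilon>" using epos by simp
      also have "\<dots> = W \<sigma> - (w0 - d0)" using L_pos by (simp add: \<epsilon>_def)
      finally show False using a0'(2) by (simp add: abs_less_iff)
    qed
    have sig2: "\<sigma> < s1" using sig1 Wsig Ws1 by (cases "\<sigma> = s1") auto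
    have notA: "w0 - d0 < W s" if "\<sigma> < s" "s \<le> s1" for s
    proof -
      have "s \<notin> A"
      proof
        assume "s \<in> A" then have "s \<le> \<sigma>" unfolding \<sigma>_def by (rule cSup_upper[OF _ bddA])
        with that show False by simp
      qed
      then show ?thesis using that sig0 by (auto simp: A_def)
    qed
    have Wsig2: "w0 - 2 * d0 < W \<sigma>"
    proof -
      define s where "s = min s1 (\<sigma> + d0 / (L + 1))"
      have s: "\<sigma> < s" "s \<le> s1" using sig2 d0 L_pos by (auto simp: s_def)
      have "\<bar>W s - W \<sigma>\<bar> \<le> L * (s - \<sigma>)" using s by (intro W_lip1[OF sig0]) auto
      also have "\<dots> \<le> L * (d0 / (L + 1))" using L_pos s by (intro mult_left_mono) (auto simp: s_def)
      also have "\<dots> < d0" using L_pos d0 by (simp add: field_simps)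
      finally show ?thesis using notA[OF s] by (simp add: abs_less_iff)
    qed
    have "W s1 - W \<sigma> \<le> (1 - 1) * (s1 - \<sigma>)"
    proof (rule W_inc_le[OF sig0])
      show "\<sigma> \<le> s1" by (rule sig1)
      fix u assume u: "u \<in> {\<sigma>..s1}"
      have "w0 - 2 * d0 \<le> W u"
      proof (cases "u = \<sigma>")
        case True then show ?thesis using Wsig2 by simp
      next
        case False then show ?thesis using notA[of u] u d0 by auto
      qed
      then show "f (W u) \<le> 1" using band[of "W u"] eta by simp
    qed
    then show False using Wsig Ws1 by simp
  qed
qed

lemma stepC: assumes f1: "f w0 < 1" shows False
proof -
  have w: "0 < w0"
  proof (rule ccontr)
    assume "\<not> 0 < w0" then have "w0 = 0" using w0_nonneg by simp
    then show False using f1 f_0 rho_gt1 by simp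
  qed
  obtain e where e: "e > 0" "f (w0 - e) < 1" using cont_lt f1 by blast
  define \<eta> where "\<eta> = 1 - f (w0 - e)"
  have eta: "0 < \<eta>" using e by (simp add: \<eta>_def)
  define d0 where "d0 = min e w0 / 2"
  have d0: "0 < d0" "2 * d0 \<le> e" "2 * d0 \<le> w0" using e w by (auto simp: d0_def)
  have band: "f u \<le> 1 - \<eta>" if "w0 - 2 * d0 \<le> u" for u
    using f_mono[of "w0 - e" u] that d0 by (simp add: \<eta>_def)
  define s0 where "s0 = d0 / \<eta>"
  have s0: "0 < s0" using d0 eta by (simp add: s0_def)
  have cl: "W s \<le> w0 - d0" if "s0 \<le> s" for s
    by (rule claim_band[OF d0(1) eta band]) (use that in \<open>simp_all add: s0_def\<close>)
  define x where "x = w0 - d0 / 2"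
  define t where "t = s0 + d0 / 2"
  have x: "0 \<le> x" "x < w0" using d0 by (auto simp: x_def)
  have t: "0 \<le> t" using s0 d0 by (simp add: t_def)
  obtain k where k: "0 < emeasure (th k) ({x..} \<times> {0..})" using T2[OF x] by blast
  have sh: "shift ({x..} \<times> {0..}) (t, t) \<subseteq> {x + t..} \<times> {0..}"
    using t by (auto simp: shift_def)
  have "emeasure (th k) (shift ({x..} \<times> {0..}) (t, t)) \<le> emeasure (th k) ({x + t..} \<times> {0..})"
    by (rule emeasure_mono[OF sh]) (use prod_sets[of "{x + t..}" "{0..}"] in simp)
  moreover have "emeasure (th k) ({x + t..} \<times> {0..}) = 0"
    by (rule T1) (use s0 in \<open>simp add: x_def t_def\<close>)
  ultimately have z1: "emeasure (th k) (shift ({x..} \<times> {0..}) (t, t)) = 0" by simp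
  have z2: "(\<integral>\<^sup>+ s \<in> {0..t}. emeasure (delta_plus (W s) \<Otimes>\<^sub>M Gam k) (shift ({x..} \<times> {0..}) (t - s, t - s)) \<partial>lborel) = 0"
  proof -
    have "(\<integral>\<^sup>+ s \<in> {0..t}. emeasure (delta_plus (W s) \<Otimes>\<^sub>M Gam k) (shift ({x..} \<times> {0..}) (t - s, t - s)) \<partial>lborel)
       = (\<integral>\<^sup>+ s. (0::ennreal) \<partial>(lborel::real measure))"
    proof (intro nn_integral_cong)
      fix s :: real
      show "emeasure (delta_plus (W s) \<Otimes>\<^sub>M Gam k) (shift ({x..} \<times> {0..}) (t - s, t - s)) * indicator {0..t} s = 0"
      proof (cases "s \<in> {0..t}")
        case False then show ?thesis by simp
      next
        case True
        have "W s - (t - s) < x"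
        proof (cases "s < s0")
          case True
          then have "d0 / 2 < t - s" by (simp add: t_def)
          moreover have "W s \<le> w0" using W_le \<open>s \<in> {0..t}\<close> by simp
          ultimately show ?thesis by (simp add: x_def)
        next
          case False
          then have "W s \<le> w0 - d0" using cl by simp
          moreover have "0 \<le> t - s" using \<open>s \<in> {0..t}\<close> by simp
          ultimately show ?thesis using d0 by (simp add: x_def)
        qed
        then show ?thesis by (simp add: integrand_Bx)
      qed
    qed
    then show ?thesis by simp
  qed
  have "emeasure (th k) ({x..} \<times> {0..}) = 0"
    using eqn[OF Bx_sets Bx_Rp2[OF x(1)] t, of k] z1 z2 by simp
  with k show False by simp
qed

end


theorem theorem3p3:
  fixes lam mu :: "'k::finite \<Rightarrow> real" and Gam :: "'k \<Rightarrow> real measure"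
  assumes lam_pos: "\<forall>k. 0 < lam k"
    and mu_pos: "\<forall>k. 0 < mu k"
    and rho_gt1: "(\<Sum>k\<in>UNIV. rho lam mu k) > 1"
    and Gam_prob: "\<forall>k. prob_space (Gam k)"
    and Gam_borel: "\<forall>k. sets (Gam k) = sets (borel :: real measure)"
    and Gam_pos: "\<forall>k. emeasure (Gam k) {..0} = 0"
    and Gam_cont: "\<forall>k x. measure (Gam k) {x} = 0"
    and Gam_mean: "\<forall>k. integrable (Gam k) (\<lambda>x. x)"
  shows "{th. invariant_state lam mu Gam th} = theta_w lam Gam ` {w_l lam mu Gam .. w_u lam mu Gam}"
proof -
  have qsI: "qs lam mu Gam"
    unfolding qs_def using lam_pos mu_pos rho_gt1 Gam_prob Gam_borel Gam_pos Gam_cont by blast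
  interpret Q: qs lam mu Gam by (rule qsI)
  show ?thesis
  proof (intro set_eqI iffI)
    fix th assume "th \<in> {th. invariant_state lam mu Gam th}"
    then have "invariant_state lam mu Gam th" by simp
    then obtain zeta where thI: "th \<in> Istates Gam" and fs: "fluid_sol lam mu Gam th zeta"
      and cz: "\<forall>t\<ge>0. zeta t = th"
      by (auto simp: invariant_state_def)
    from fs obtain W where z0: "zeta 0 = th" and ws: "workload_sol lam mu Gam W (w_th th)"
      and eq: "\<forall>k B t. B \<in> sets (borel :: (real \<times> real) measure) \<and> B \<subseteq> Rp2 \<and> 0 \<le> t \<longrightarrow>
           emeasure (zeta t k) B =
             emeasure (zeta 0 k) (shift B (t, t)) +
             ennreal (lam k) * (\<integral>\<^sup>+ s \<in> {0..t}.
                emeasure (delta_plus (W s) \<Otimes>\<^sub>M Gam k) (shift B (t - s, t - s)) \<partial>lborel)"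
      unfolding fluid_sol_def by blast
    have wlI: "wl lam mu Gam W (w_th th)"
      unfolding wl_def wl_axioms_def using qsI ws by blast
    interpret I: inv lam mu Gam W "w_th th" th
    proof (rule inv.intro[OF wlI], unfold inv_axioms_def, intro conjI allI impI refl thI)
      fix k B and t :: real
      assume B: "B \<in> sets borel" "B \<subseteq> Rp2" and t: "0 \<le> t"
      then show "emeasure (th k) B = emeasure (th k) (shift B (t, t)) +
        ennreal (lam k) * (\<integral>\<^sup>+ s \<in> {0..t}. emeasure (delta_plus (W s) \<Otimes>\<^sub>M Gam k) (shift B (t - s, t - s)) \<partial>lborel)"
        using eq cz z0 by auto
    qed
    have f1: "1 \<le> Q.f (w_th th)"
    proof (rule ccontr)
      assume "\<not> 1 \<le> Q.f (w_th th)"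
      then show False using I.stepC by simp
    qed
    have c: "\<forall>t\<ge>0. W t = w_th th" and fw: "Q.f (w_th th) = 1"
      using I.stepF[OF f1] by auto
    have w: "0 \<le> w_th th" using Q.f1_pos[OF fw] by simp
    have "th = (\<lambda>k. Q.mw (w_th th) k)" using I.th_eq[OF c fw] by (intro ext) simp
    also have "\<dots> = theta_w lam Gam (w_th th)" using Q.theta_mw[OF w] by (intro ext) simp
    finally show "th \<in> theta_w lam Gam ` {w_l lam mu Gam .. w_u lam mu Gam}"
      using Q.f1_imp[OF fw] by auto
  next
    fix th assume "th \<in> theta_w lam Gam ` {w_l lam mu Gam .. w_u lam mu Gam}"
    then obtain w where w: "w_l lam mu Gam \<le> w" "w \<le> w_u lam mu Gam" and th: "th = theta_w lam Gam w"
      by auto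
    show "th \<in> {th. invariant_state lam mu Gam th}" using Q.partA[OF w] th by simp
  qed
qed

end
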